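(* Let $\tau>0$, $a>0$, let $s,d$ be integers with $1\le s\le d$ and let $\ell\in\mathcal L$. Then $$\inf_{\hat T}\sup_{P_\xi\in\mathcal G_{a,\tau}}\sup_{\sigma>0}\sup_{\theta\in\Theta_s}\mathbf E_{\theta,P_\xi,\sigma}\,\ell\Big(c\,\phi_{\rm exp}(s,d)^{-1}\Big|\frac{\hat T}{\sigma^2}-1\Big|\Big)\ge c',$$ where $\phi_{\rm exp}(s,d)=\max\big(\frac1{\sqrt d},\frac sd\log^{2/a}(\frac{ed}{s})\big)$ and $c,c'>0$ depend only on $\ell$, $a$ and $\tau$.
   Context: Model: $Y_i=\theta_i+\sigma\xi_i$, $i=1,\dots,d$, $\theta\in\mathbb R^d$, $\sigma>0$, $\xi_i$ i.i.d. with distribution $P_\xi$; $\mathbf E_{\theta,P_\xi,\sigma}$ expectation; $\Theta_s=\{\theta:\|\theta\|_0\le s\}$. $\mathcal G_{a,\tau}$: distributions with $\mathbf E\xi_1=0,\mathbf E\xi_1^2=1$, $\mathbf P(|\xi_1|>t)\le2e^{-(t/\tau)^a}$ for all $t\ge2$. $\mathcal L$: nondecreasing $\ell:[0,\infty)\to[0,\infty)$, $\ell(0)=0$, $\ell\not\equiv0$; $\inf_{\hat T}$ over all estimators. *)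

theory Defs
  imports "HOL-Probability.Probability"
begin

definition noise_class :: "real \<Rightarrow> real \<Rightarrow> real measure set" where
  "noise_class a \<tau> = {P. prob_space P \<and> sets P = sets borel \<and>
      integrable P (\<lambda>x. x) \<and> (\<integral>x. x \<partial>P) = 0 \<and>
      integrable P (\<lambda>x. x\<^sup>2) \<and> (\<integral>x. x\<^sup>2 \<partial>P) = 1 \<and>
      (\<forall>t\<ge>2. measure P {x. \<bar>x\<bar> > t} \<le> 2 * exp (- ((t / \<tau>) powr a)))}"

definition loss_class :: "(real \<Rightarrow> real) set" where
  "loss_class = {ell. mono_on {0..} ell \<and> (\<forall>x\<ge>0. ell x \<ge> 0) \<and> ell 0 = 0 \<and>
      (\<exists>x\<ge>0. ell x \<noteq> 0)}"

text \<open>s-sparse vectors in R^d, vectors represented as nat => real on indices {..<d}.\<close>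
definition sparse_vecs :: "nat \<Rightarrow> nat \<Rightarrow> (nat \<Rightarrow> real) set" where
  "sparse_vecs d s = {\<theta>. card {i\<in>{..<d}. \<theta> i \<noteq> 0} \<le> s}"

definition phi_exp :: "real \<Rightarrow> nat \<Rightarrow> nat \<Rightarrow> real" where
  "phi_exp a s d = max (1 / sqrt (real d))
      (real s / real d * (ln (exp 1 * real d / real s)) powr (2 / a))"

definition obs :: "nat \<Rightarrow> (nat \<Rightarrow> real) \<Rightarrow> real \<Rightarrow> (nat \<Rightarrow> real) \<Rightarrow> (nat \<Rightarrow> real)" where
  "obs d \<theta> \<sigma> \<xi> = restrict (\<lambda>i. \<theta> i + \<sigma> * \<xi> i) {..<d}"

definition risk :: "(real \<Rightarrow> real) \<Rightarrow> real \<Rightarrow> real \<Rightarrow> nat \<Rightarrow> nat \<Rightarrow>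
    ((nat \<Rightarrow> real) \<Rightarrow> real) \<Rightarrow> real measure \<Rightarrow> real \<Rightarrow> (nat \<Rightarrow> real) \<Rightarrow> ennreal" where
  "risk ell a c s d T P \<sigma> \<theta> =
     (\<integral>\<^sup>+ \<xi>. ennreal (ell (c / phi_exp a s d * \<bar>T (obs d \<theta> \<sigma> \<xi>) / \<sigma>\<^sup>2 - 1\<bar>))
        \<partial>(PiM {..<d} (\<lambda>_. P)))"

end

theory Submission
  imports Defs
begin


definition wpmf :: "'b set \<Rightarrow> ('b \<Rightarrow> real) \<Rightarrow> 'b pmf" where
  "wpmf S f = embed_pmf (\<lambda>x. if x \<in> S then f x else 0)"

definition Dm :: "'b set \<Rightarrow> ('b \<Rightarrow> real) \<Rightarrow> ('b \<Rightarrow> real) \<Rightarrow> real measure" where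
  "Dm S f h = distr (measure_pmf (wpmf S f)) borel h"

locale wts =
  fixes S :: "'b set" and f :: "'b \<Rightarrow> real"
  assumes finS: "finite S" and fnn: "\<And>x. x \<in> S \<Longrightarrow> f x \<ge> 0" and fsum: "sum f S = 1"
begin

lemma pmf_w: "pmf (wpmf S f) x = (if x \<in> S then f x else 0)"
  unfolding wpmf_def
proof (rule pmf_embed_pmf)
  show "\<And>x. 0 \<le> (if x \<in> S then f x else 0)" using fnn by auto
  have "(\<integral>\<^sup>+ x. ennreal (if x \<in> S then f x else 0) \<partial>count_space UNIV) = (\<Sum>x\<in>S. ennreal (if x \<in> S then f x else 0))"
    by (rule nn_integral_count_space') (auto simp: finS)
  also have "\<dots> = ennreal (\<Sum>x\<in>S. f x)"
    by (subst sum_ennreal[symmetric]) (auto simp: fnn)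
  finally show "(\<integral>\<^sup>+ x. ennreal (if x \<in> S then f x else 0) \<partial>count_space UNIV) = 1"
    using fsum by simp
qed

lemma set_w: "set_pmf (wpmf S f) \<subseteq> S"
  using pmf_w by (auto simp: set_pmf_eq split: if_splits)

lemma Dm_sets[simp]: "sets (Dm S f h) = sets borel"
  by (simp add: Dm_def)

lemma Dm_space[simp]: "space (Dm S f h) = UNIV"
  by (simp add: Dm_def)

lemma Dm_prob: "prob_space (Dm S f h)"
  unfolding Dm_def by (rule prob_space.prob_space_distr) (auto simp: measure_pmf.prob_space_axioms)

lemma Dm_nn:
  assumes g: "g \<in> borel_measurable borel"
  shows "(\<integral>\<^sup>+x. g x \<partial>Dm S f h) = (\<Sum>y\<in>S. ennreal (f y) * g (h y))"
proof -
  have "(\<integral>\<^sup>+x. g x \<partial>Dm S f h) = (\<integral>\<^sup>+x. g (h x) \<partial>measure_pmf (wpmf S f))"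
    unfolding Dm_def by (rule nn_integral_distr) (auto simp: g)
  also have "\<dots> = (\<Sum>y\<in>S. g (h y) * pmf (wpmf S f) y)"
    by (rule nn_integral_measure_pmf_support) (use finS set_w in auto)
  also have "\<dots> = (\<Sum>y\<in>S. ennreal (f y) * g (h y))"
    by (rule sum.cong) (auto simp: pmf_w mult.commute)
  finally show ?thesis .
qed

lemma Dm_integrable: "integrable (Dm S f h) g"
  if "g \<in> borel_measurable borel" for g :: "real \<Rightarrow> real"
  unfolding Dm_def
  by (subst integrable_distr_eq) (auto simp: that intro!: integrable_measure_pmf_finite finite_subset[OF set_w finS])

lemma Dm_integral: "(\<integral>x. g x \<partial>Dm S f h) = (\<Sum>y\<in>S. f y * g (h y))"
  if "g \<in> borel_measurable borel" for g :: "real \<Rightarrow> real"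
proof -
  have "(\<integral>x. g x \<partial>Dm S f h) = (\<integral>x. g (h x) \<partial>measure_pmf (wpmf S f))"
    unfolding Dm_def by (rule integral_distr) (auto simp: that)
  also have "\<dots> = (\<Sum>y\<in>S. g (h y) * pmf (wpmf S f) y)"
    by (rule integral_measure_pmf_real) (use finS set_w in auto)
  also have "\<dots> = (\<Sum>y\<in>S. f y * g (h y))"
    by (rule sum.cong) (auto simp: pmf_w mult.commute)
  finally show ?thesis .
qed

lemma Dm_measure: "measure (Dm S f h) A = (\<Sum>y\<in>{y\<in>S. h y \<in> A}. f y)"
  if "A \<in> sets borel"
proof -
  have "measure (Dm S f h) A = measure (measure_pmf (wpmf S f)) (h -` A)"
    unfolding Dm_def using that by (subst measure_distr) auto
  also have "\<dots> = measure (measure_pmf (wpmf S f)) {y\<in>S. h y \<in> A}"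
    by (rule measure_eq_AE) (use set_w in \<open>auto intro!: AE_pmfI\<close>)
  also have "\<dots> = (\<Sum>y\<in>{y\<in>S. h y \<in> A}. f y)"
    by (subst measure_measure_pmf_finite) (auto simp: finS pmf_w)
  finally show ?thesis .
qed

end


lemma PiM_sum:
  fixes P :: "real measure" and S :: "'b set" and f h :: "'b \<Rightarrow> real"
  assumes prob: "prob_space P" and sP: "sets P = sets borel"
   and nn: "\<And>g. g \<in> borel_measurable borel \<Longrightarrow> (\<integral>\<^sup>+x. g x \<partial>P) = (\<Sum>y\<in>S. ennreal (f y) * g (h y))"
   and finS: "finite S" and fnn: "\<And>y. y\<in>S \<Longrightarrow> f y \<ge> 0"
   and fin: "finite I"
  shows "F \<in> borel_measurable (PiM I (\<lambda>_. P)) \<Longrightarrow> (\<integral>\<^sup>+x. F x \<partial>PiM I (\<lambda>_. P)) =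
     (\<Sum>u\<in>PiE I (\<lambda>_. S). ennreal (\<Prod>i\<in>I. f (u i)) * F (restrict (\<lambda>i. h (u i)) I))"
  using fin
proof (induction I arbitrary: F rule: finite_induct)
  case empty
  then show ?case by (simp add: PiM_empty nn_integral_count_space_finite)
next
  case (insert i I)
  interpret sf: sigma_finite_measure P using prob by (simp add: prob_space_imp_sigma_finite)
  interpret product_sigma_finite "\<lambda>_. P" by unfold_locales
  have Fm: "F \<in> borel_measurable (PiM (insert i I) (\<lambda>_. P))" by fact
  have meas_upd: "(\<lambda>x. x(i := v)) \<in> measurable (PiM I (\<lambda>_. P)) (PiM (insert i I) (\<lambda>_. P))" for v
  proof (rule measurable_fun_upd[where J=I])
    have "space P = UNIV" using sets_eq_imp_space_eq[OF sP] by simp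
    then show "(\<lambda>x. v) \<in> measurable (PiM I (\<lambda>_. P)) P" by (intro measurable_const) auto
  qed auto
  have "(\<integral>\<^sup>+x. F x \<partial>PiM (insert i I) (\<lambda>_. P)) = (\<integral>\<^sup>+ x. (\<integral>\<^sup>+ y. F (x(i := y)) \<partial>P) \<partial>(PiM I (\<lambda>_. P)))"
    by (rule product_nn_integral_insert) (use insert in auto)
  also have "\<dots> = (\<integral>\<^sup>+ x. (\<Sum>v\<in>S. ennreal (f v) * F (x(i := h v))) \<partial>(PiM I (\<lambda>_. P)))"
  proof (rule nn_integral_cong)
    fix x assume x: "x \<in> space (PiM I (\<lambda>_. P))"
    have "(\<lambda>y. F (x(i := y))) \<in> borel_measurable P"
      using measurable_comp[OF measurable_component_update[OF x \<open>i \<notin> I\<close>] Fm] unfolding comp_def .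
    moreover have "measurable P (borel::ennreal measure) = measurable borel borel"
      by (rule measurable_cong_sets[OF sP refl])
    ultimately have "(\<lambda>y. F (x(i := y))) \<in> borel_measurable borel" by simp
    then show "(\<integral>\<^sup>+ y. F (x(i := y)) \<partial>P) = (\<Sum>v\<in>S. ennreal (f v) * F (x(i := h v)))"
      by (rule nn)
  qed
  also have "\<dots> = (\<Sum>v\<in>S. ennreal (f v) * (\<integral>\<^sup>+ x. F (x(i := h v)) \<partial>(PiM I (\<lambda>_. P))))"
  proof -
    have mv: "(\<lambda>x. F (x(i := h v))) \<in> borel_measurable (PiM I (\<lambda>_. P))" for v
      using measurable_comp[OF meas_upd Fm] unfolding comp_def .
    have "(\<integral>\<^sup>+ x. (\<Sum>v\<in>S. ennreal (f v) * F (x(i := h v))) \<partial>(PiM I (\<lambda>_. P))) =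
       (\<Sum>v\<in>S. (\<integral>\<^sup>+ x. ennreal (f v) * F (x(i := h v)) \<partial>(PiM I (\<lambda>_. P))))"
      apply (rule nn_integral_sum) apply (rule borel_measurable_times_ennreal[OF measurable_const mv]) apply simp done
    also have "\<dots> = (\<Sum>v\<in>S. ennreal (f v) * (\<integral>\<^sup>+ x. F (x(i := h v)) \<partial>(PiM I (\<lambda>_. P))))"
      by (rule sum.cong[OF refl], rule nn_integral_cmult[OF mv])
    finally show ?thesis .
  qed
  also have "\<dots> = (\<Sum>v\<in>S. ennreal (f v) * (\<Sum>u\<in>PiE I (\<lambda>_. S). ennreal (\<Prod>j\<in>I. f (u j)) * F ((restrict (\<lambda>j. h (u j)) I)(i := h v))))"
  proof (rule sum.cong[OF refl])
    fix v assume "v \<in> S"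
    have "(\<lambda>x. F (x(i := h v))) \<in> borel_measurable (PiM I (\<lambda>_. P))"
      using measurable_comp[OF meas_upd Fm] unfolding comp_def .
    from insert.IH[OF this] show "ennreal (f v) * (\<integral>\<^sup>+ x. F (x(i := h v)) \<partial>(PiM I (\<lambda>_. P))) = ennreal (f v) * (\<Sum>u\<in>PiE I (\<lambda>_. S). ennreal (\<Prod>j\<in>I. f (u j)) * F ((restrict (\<lambda>j. h (u j)) I)(i := h v)))"
      by (rule arg_cong)
  qed
  also have "\<dots> = (\<Sum>(v,u)\<in>S \<times> PiE I (\<lambda>_. S). ennreal (f v) * (ennreal (\<Prod>j\<in>I. f (u j)) * F ((restrict (\<lambda>j. h (u j)) I)(i := h v))))"
    unfolding sum.cartesian_product[symmetric] by (rule sum.cong[OF refl], rule sum_distrib_left)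
  also have "\<dots> = (\<Sum>w\<in>(\<lambda>(y, g). g(i := y)) ` (S \<times> PiE I (\<lambda>_. S)). ennreal (\<Prod>j\<in>insert i I. f (w j)) * F (restrict (\<lambda>j. h (w j)) (insert i I)))"
  proof -
    let ?G = "\<lambda>w. ennreal (\<Prod>j\<in>insert i I. f (w j)) * F (restrict (\<lambda>j. h (w j)) (insert i I))"
    have R: "(\<Sum>w\<in>(\<lambda>(y, g). g(i := y)) ` (S \<times> PiE I (\<lambda>_. S)). ?G w) = (\<Sum>x\<in>S \<times> PiE I (\<lambda>_. S). (?G \<circ> (\<lambda>(y, g). g(i := y))) x)"
      by (rule sum.reindex[OF inj_combinator[OF \<open>i \<notin> I\<close>]])
    have "(\<Sum>(v,u)\<in>S \<times> PiE I (\<lambda>_. S). ennreal (f v) * (ennreal (\<Prod>j\<in>I. f (u j)) * F ((restrict (\<lambda>j. h (u j)) I)(i := h v))))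
       = (\<Sum>x\<in>S \<times> PiE I (\<lambda>_. S). (?G \<circ> (\<lambda>(y, g). g(i := y))) x)"
    proof (rule sum.cong[OF refl], clarify)
      fix v u assume v: "v \<in> S" and u: "u \<in> PiE I (\<lambda>_. S)"
      have p: "(\<Prod>j\<in>insert i I. f ((u(i := v)) j)) = f v * (\<Prod>j\<in>I. f (u j))"
      proof -
        have "(\<Prod>j\<in>insert i I. f ((u(i := v)) j)) = f v * (\<Prod>j\<in>I. f ((u(i := v)) j))"
          using insert(1,2) by (subst prod.insert) auto
        also have "(\<Prod>j\<in>I. f ((u(i := v)) j)) = (\<Prod>j\<in>I. f (u j))"
          using insert(2) by (intro prod.cong) auto
        finally show ?thesis .
      qed
      have r: "restrict (\<lambda>j. h ((u(i := v)) j)) (insert i I) = (restrict (\<lambda>j. h (u j)) I)(i := h v)"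
        by (rule ext) (use insert(2) in auto)
      have "0 \<le> f v" "0 \<le> (\<Prod>j\<in>I. f (u j))" using v u fnn by (auto intro!: prod_nonneg simp: PiE_iff)
      then show "ennreal (f v) * (ennreal (\<Prod>j\<in>I. f (u j)) * F ((restrict (\<lambda>j. h (u j)) I)(i := h v))) =
        (?G \<circ> (\<lambda>(y, g). g(i := y))) (v, u)"
        unfolding comp_def split p r by (simp add: ennreal_mult mult.assoc)
    qed
    then show ?thesis using R by simp
  qed
  also have "(\<lambda>(y, g). g(i := y)) ` (S \<times> PiE I (\<lambda>_. S)) = PiE (insert i I) (\<lambda>_. S)"
    by (rule PiE_insert_eq[symmetric])
  finally show ?case .
qed



lemma loss_mono: "ell \<in> loss_class \<Longrightarrow> 0 \<le> x \<Longrightarrow> x \<le> y \<Longrightarrow> ell x \<le> ell y"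
  unfolding loss_class_def mono_on_def by auto

lemma loss_nn: "ell \<in> loss_class \<Longrightarrow> 0 \<le> x \<Longrightarrow> 0 \<le> ell x"
  unfolding loss_class_def by auto

context wts begin

lemma Dm_noise:
  assumes m1: "(\<Sum>y\<in>S. f y * h y) = 0" and m2: "(\<Sum>y\<in>S. f y * (h y)\<^sup>2) = 1"
    and tl: "\<And>t. t \<ge> 2 \<Longrightarrow> (\<Sum>y\<in>{y\<in>S. h y \<in> {x. \<bar>x\<bar> > t}}. f y) \<le> 2 * exp (- ((t / \<tau>) powr a))"
  shows "Dm S f h \<in> noise_class a \<tau>"
proof -
  have b1: "(\<lambda>x::real. x) \<in> borel_measurable borel" by simp
  have b2: "(\<lambda>x::real. x\<^sup>2) \<in> borel_measurable borel" by simp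
  have st: "{x::real. \<bar>x\<bar> > t} \<in> sets borel" for t by measurable
  show ?thesis unfolding noise_class_def
    using Dm_prob Dm_integrable[OF b1] Dm_integrable[OF b2] Dm_integral[OF b1] Dm_integral[OF b2]
      Dm_measure[OF st] tl m1 m2 by auto
qed

lemma risk_Dm:
  fixes ell :: "real \<Rightarrow> real"
  assumes ell: "ell \<in> loss_class" and k: "c / phi_exp a s d \<ge> 0" and sig: "\<sigma> > 0"
    and T: "T \<in> borel_measurable (PiM {..<d} (\<lambda>_. borel))"
  shows "risk ell a c s d T (Dm S f h) \<sigma> \<theta> = ennreal (\<Sum>u\<in>PiE {..<d} (\<lambda>_. S).
     (\<Prod>i<d. f (u i)) * ell (c / phi_exp a s d * \<bar>T (restrict (\<lambda>i. \<theta> i + \<sigma> * h (u i)) {..<d}) / \<sigma>\<^sup>2 - 1\<bar>))"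
proof -
  define k where "k = c / phi_exp a s d"
  define ell' where "ell' = (\<lambda>x. ell (max 0 x))"
  have mono: "mono ell'" unfolding ell'_def mono_def using loss_mono[OF ell] by auto
  have ellm: "ell' \<in> borel_measurable borel" by (rule borel_measurable_mono[OF mono])
  have e: "ell (k * z) = ell' (k * z)" if "z \<ge> 0" for z
  proof -
    have "0 \<le> k * z" using k that unfolding k_def by (rule mult_nonneg_nonneg)
    then show ?thesis unfolding ell'_def by (simp add: max_def)
  qed
  have sPi: "sets (PiM {..<d} (\<lambda>_. Dm S f h)) = sets (PiM {..<d} (\<lambda>_. borel))"
    by (rule sets_PiM_cong) auto
  have obsm: "obs d \<theta> \<sigma> \<in> measurable (PiM {..<d} (\<lambda>_. borel)) (PiM {..<d} (\<lambda>_. borel))"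
    unfolding obs_def by measurable
  have Gm: "(\<lambda>\<xi>. ennreal (ell' (k * \<bar>T (obs d \<theta> \<sigma> \<xi>) / \<sigma>\<^sup>2 - 1\<bar>))) \<in> borel_measurable (PiM {..<d} (\<lambda>_. borel))"
    using ellm T obsm by measurable
  then have Gm': "(\<lambda>\<xi>. ennreal (ell' (k * \<bar>T (obs d \<theta> \<sigma> \<xi>) / \<sigma>\<^sup>2 - 1\<bar>))) \<in> borel_measurable (PiM {..<d} (\<lambda>_. Dm S f h))"
    using measurable_cong_sets[OF sPi refl, of "borel::ennreal measure"] by simp
  have "risk ell a c s d T (Dm S f h) \<sigma> \<theta> = (\<integral>\<^sup>+ \<xi>. ennreal (ell' (k * \<bar>T (obs d \<theta> \<sigma> \<xi>) / \<sigma>\<^sup>2 - 1\<bar>)) \<partial>(PiM {..<d} (\<lambda>_. Dm S f h)))"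
    unfolding risk_def k_def[symmetric] by (simp add: e)
  also have "\<dots> = (\<Sum>u\<in>PiE {..<d} (\<lambda>_. S). ennreal (\<Prod>i<d. f (u i)) * ennreal (ell' (k * \<bar>T (obs d \<theta> \<sigma> (restrict (\<lambda>i. h (u i)) {..<d})) / \<sigma>\<^sup>2 - 1\<bar>)))"
    by (rule PiM_sum[OF Dm_prob Dm_sets _ finS fnn _ Gm']) (auto simp: Dm_nn)
  also have "\<dots> = (\<Sum>u\<in>PiE {..<d} (\<lambda>_. S). ennreal ((\<Prod>i<d. f (u i)) * ell (k * \<bar>T (restrict (\<lambda>i. \<theta> i + \<sigma> * h (u i)) {..<d}) / \<sigma>\<^sup>2 - 1\<bar>)))"
  proof (rule sum.cong[OF refl])
    fix u assume u: "u \<in> PiE {..<d} (\<lambda>_. S)"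
    have o: "obs d \<theta> \<sigma> (restrict (\<lambda>i. h (u i)) {..<d}) = restrict (\<lambda>i. \<theta> i + \<sigma> * h (u i)) {..<d}"
      unfolding obs_def by (rule ext) auto
    have "0 \<le> (\<Prod>i<d. f (u i))" using u fnn by (auto intro!: prod_nonneg simp: PiE_iff)
    then show "ennreal (\<Prod>i<d. f (u i)) * ennreal (ell' (k * \<bar>T (obs d \<theta> \<sigma> (restrict (\<lambda>i. h (u i)) {..<d})) / \<sigma>\<^sup>2 - 1\<bar>)) =
      ennreal ((\<Prod>i<d. f (u i)) * ell (k * \<bar>T (restrict (\<lambda>i. \<theta> i + \<sigma> * h (u i)) {..<d}) / \<sigma>\<^sup>2 - 1\<bar>))"
      unfolding o e[OF abs_ge_zero, symmetric] by (rule ennreal_mult'[symmetric])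
  qed
  also have "\<dots> = ennreal (\<Sum>u\<in>PiE {..<d} (\<lambda>_. S). (\<Prod>i<d. f (u i)) * ell (k * \<bar>T (restrict (\<lambda>i. \<theta> i + \<sigma> * h (u i)) {..<d}) / \<sigma>\<^sup>2 - 1\<bar>))"
  proof (rule sum_ennreal)
    fix u assume u: "u \<in> PiE {..<d} (\<lambda>_. S)"
    have "0 \<le> (\<Prod>i<d. f (u i))" using u fnn by (auto intro!: prod_nonneg simp: PiE_iff)
    moreover have "0 \<le> ell (k * \<bar>T (restrict (\<lambda>i. \<theta> i + \<sigma> * h (u i)) {..<d}) / \<sigma>\<^sup>2 - 1\<bar>)"
      using loss_nn[OF ell] mult_nonneg_nonneg[OF k abs_ge_zero] unfolding k_def by blast
    ultimately show "0 \<le> (\<Prod>i<d. f (u i)) * ell (k * \<bar>T (restrict (\<lambda>i. \<theta> i + \<sigma> * h (u i)) {..<d}) / \<sigma>\<^sup>2 - 1\<bar>)" by simp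
  qed
  finally show ?thesis by (simp add: k_def)
qed

end


lemma sqrt_prod: "sqrt (prod f A) = (\<Prod>x\<in>A. sqrt (f x))"
  by (induction A rule: infinite_finite_induct) (auto simp: real_sqrt_mult)

lemma bernoulli_le: "0 \<le> x \<Longrightarrow> x \<le> 1 \<Longrightarrow> 1 - real n * x \<le> (1 - x :: real) ^ n"
proof (induction n)
  case (Suc n)
  have "1 - real (Suc n) * x \<le> (1 - real n * x) * (1 - x)"
    using Suc.prems by (simp add: algebra_simps)
  also have "\<dots> \<le> (1 - x) ^ n * (1 - x)"
    using Suc by (intro mult_right_mono) auto
  finally show ?case by (simp add: mult.commute)
qed simp

lemma lecam:
  fixes U :: "'u set" and Q1 Q2 G1 G2 :: "'u \<Rightarrow> real"
  assumes U: "finite U" and q1: "\<And>u. u \<in> U \<Longrightarrow> Q1 u \<ge> 0" and q2: "\<And>u. u \<in> U \<Longrightarrow> Q2 u \<ge> 0"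
    and s1: "sum Q1 U = 1" and s2: "sum Q2 U = 1"
    and g1: "\<And>u. u \<in> U \<Longrightarrow> G1 u \<ge> 0" and g2: "\<And>u. u \<in> U \<Longrightarrow> G2 u \<ge> 0"
    and g: "\<And>u. u \<in> U \<Longrightarrow> G1 u + G2 u \<ge> l0" and l0: "l0 \<ge> 0"
  shows "l0 * (\<Sum>u\<in>U. sqrt (Q1 u * Q2 u))\<^sup>2 / 2 \<le> (\<Sum>u\<in>U. Q1 u * G1 u) + (\<Sum>u\<in>U. Q2 u * G2 u)"
proof -
  have "(\<Sum>u\<in>U. sqrt (Q1 u * Q2 u))\<^sup>2 = (\<Sum>u\<in>U. sqrt (min (Q1 u) (Q2 u)) * sqrt (max (Q1 u) (Q2 u)))\<^sup>2"
    by (rule arg_cong[where f="\<lambda>x. x\<^sup>2"], rule sum.cong) (auto simp: real_sqrt_mult[symmetric] min_def max_def mult.commute)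
  also have "\<dots> \<le> (\<Sum>u\<in>U. (sqrt (min (Q1 u) (Q2 u)))\<^sup>2) * (\<Sum>u\<in>U. (sqrt (max (Q1 u) (Q2 u)))\<^sup>2)"
    by (rule Cauchy_Schwarz_ineq_sum)
  also have "\<dots> = (\<Sum>u\<in>U. min (Q1 u) (Q2 u)) * (\<Sum>u\<in>U. max (Q1 u) (Q2 u))"
    using q1 q2 by (intro arg_cong2[where f="(*)"] sum.cong) (auto simp: le_max_iff_disj)
  also have "\<dots> \<le> (\<Sum>u\<in>U. min (Q1 u) (Q2 u)) * 2"
  proof (rule mult_left_mono)
    have "(\<Sum>u\<in>U. max (Q1 u) (Q2 u)) \<le> (\<Sum>u\<in>U. Q1 u + Q2 u)"
      using q1 q2 by (intro sum_mono) auto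
    then show "(\<Sum>u\<in>U. max (Q1 u) (Q2 u)) \<le> 2" using s1 s2 by (simp add: sum.distrib)
    show "0 \<le> (\<Sum>u\<in>U. min (Q1 u) (Q2 u))" using q1 q2 by (intro sum_nonneg) auto
  qed
  finally have A: "(\<Sum>u\<in>U. sqrt (Q1 u * Q2 u))\<^sup>2 / 2 \<le> (\<Sum>u\<in>U. min (Q1 u) (Q2 u))" by simp
  have "l0 * (\<Sum>u\<in>U. sqrt (Q1 u * Q2 u))\<^sup>2 / 2 \<le> l0 * (\<Sum>u\<in>U. min (Q1 u) (Q2 u))"
    using mult_left_mono[OF A l0] by simp
  also have "\<dots> = (\<Sum>u\<in>U. min (Q1 u) (Q2 u) * l0)" by (simp add: sum_distrib_left mult.commute)
  also have "\<dots> \<le> (\<Sum>u\<in>U. Q1 u * G1 u + Q2 u * G2 u)"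
  proof (rule sum_mono)
    fix u assume u: "u \<in> U"
    have "min (Q1 u) (Q2 u) * l0 \<le> min (Q1 u) (Q2 u) * (G1 u + G2 u)"
      using g[OF u] q1[OF u] q2[OF u] by (intro mult_left_mono) auto
    also have "\<dots> \<le> Q1 u * G1 u + Q2 u * G2 u"
      using g1[OF u] g2[OF u] by (simp add: distrib_left add_mono mult_right_mono)
    finally show "min (Q1 u) (Q2 u) * l0 \<le> Q1 u * G1 u + Q2 u * G2 u" .
  qed
  also have "\<dots> = (\<Sum>u\<in>U. Q1 u * G1 u) + (\<Sum>u\<in>U. Q2 u * G2 u)" by (rule sum.distrib)
  finally show ?thesis .
qed

definition fw :: "real \<Rightarrow> nat \<Rightarrow> real" where
  "fw p j = (if j = 0 then 1 - p else p / 2)"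

lemma dense_bound:
  fixes d :: nat and G1 G2 :: "(nat \<Rightarrow> nat) \<Rightarrow> real"
  assumes d: "d \<ge> 1" and p1: "p1 = (1 + 1 / sqrt d) / 2"
    and g1: "\<And>u. u \<in> {..<d} \<rightarrow>\<^sub>E {0,1,2} \<Longrightarrow> G1 u \<ge> 0" and g2: "\<And>u. u \<in> {..<d} \<rightarrow>\<^sub>E {0,1,2} \<Longrightarrow> G2 u \<ge> 0"
    and g: "\<And>u. u \<in> {..<d} \<rightarrow>\<^sub>E {0,1,2} \<Longrightarrow> G1 u + G2 u \<ge> l0" and l0: "l0 \<ge> 0"
  shows "l0 / 4 \<le> (\<Sum>u\<in>{..<d} \<rightarrow>\<^sub>E {0,1,2}. (\<Prod>i<d. fw p1 (u i)) * G1 u) + (\<Sum>u\<in>{..<d} \<rightarrow>\<^sub>E {0,1,2}. (\<Prod>i<d. fw (1/2) (u i)) * G2 u)"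
proof -
  define U where "U = {..<d} \<rightarrow>\<^sub>E {0::nat,1,2}"
  have e: "0 < 1 / sqrt d" "1 / sqrt d \<le> 1" using d by (auto simp: divide_simps)
  have p1b: "1/2 \<le> p1" "p1 \<le> 1" using e unfolding p1 by auto
  have fw1: "fw p j \<ge> 0" if "0 \<le> p" "p \<le> 1" for p j using that by (simp add: fw_def)
  have sfw: "(\<Sum>j\<in>{0::nat,1,2}. fw p j) = 1" for p by (simp add: fw_def)
  have sQ: "(\<Sum>u\<in>U. \<Prod>i<d. fw p (u i)) = 1" for p
    unfolding U_def by (subst prod_sum_PiE[symmetric]) (auto simp: fw_def)
  have nQ: "(\<Prod>i<d. fw p (u i)) \<ge> 0" if "0 \<le> p" "p \<le> 1" for p u
    using fw1[OF that] by (intro prod_nonneg) auto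
  define BC where "BC = (\<Sum>j\<in>{0::nat,1,2}. sqrt (fw p1 j * fw (1/2) j))"
  have "(\<Sum>u\<in>U. sqrt ((\<Prod>i<d. fw p1 (u i)) * (\<Prod>i<d. fw (1/2) (u i)))) = (\<Sum>u\<in>U. \<Prod>i<d. sqrt (fw p1 (u i) * fw (1/2) (u i)))"
    by (intro sum.cong refl) (simp add: prod.distrib[symmetric] sqrt_prod)
  also have "\<dots> = BC ^ d"
    unfolding U_def BC_def by (subst prod_sum_PiE[symmetric]) auto
  finally have bc: "(\<Sum>u\<in>U. sqrt ((\<Prod>i<d. fw p1 (u i)) * (\<Prod>i<d. fw (1/2) (u i)))) = BC ^ d" .
  have BC2: "BC\<^sup>2 \<ge> 1 - 1 / (2 * d)"
  proof -
    have "BC = sqrt ((1 - p1) / 2) + sqrt (p1 / 2)"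
    proof -
      have "sqrt (p1 / 2 * (1 / 2 / 2)) = sqrt (p1 / 2) / 2"
        using real_sqrt_mult[of 4 2] by (simp add: real_sqrt_mult real_sqrt_divide)
      then show ?thesis unfolding BC_def by (simp add: fw_def)
    qed
    then have "BC\<^sup>2 = 1/2 + 2 * sqrt ((1 - p1) / 2) * sqrt (p1 / 2)"
      using p1b by (simp add: power2_sum, simp add: field_simps)
    also have "2 * sqrt ((1 - p1) / 2) * sqrt (p1 / 2) = sqrt (1 - 1 / d) / 2"
    proof -
      have "sqrt ((1 - p1) / 2) * sqrt (p1 / 2) = sqrt ((1 - p1) / 2 * (p1 / 2))"
        by (rule real_sqrt_mult[symmetric])
      also have "(1 - p1) / 2 * (p1 / 2) = (1 - 1 / d) / 16"
        unfolding p1 using d by (simp add: field_simps power2_eq_square)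
      also have "sqrt ((1 - 1 / d) / 16) = sqrt (1 - 1 / d) / 4"
        by (simp add: real_sqrt_divide)
      finally show ?thesis by simp
    qed
    also have "1/2 + sqrt (1 - 1 / d) / 2 \<ge> 1 - 1 / (2 * d)"
    proof -
      have x: "0 \<le> 1 - 1 / real d" "1 - 1 / real d \<le> 1" using d by (auto simp: divide_simps)
      have "1 - 1 / real d = sqrt (1 - 1 / real d) * sqrt (1 - 1 / real d)" using x by simp
      also have "\<dots> \<le> sqrt (1 - 1 / real d) * 1" using x by (intro mult_left_mono) auto
      finally have "1 - 1 / real d \<le> sqrt (1 - 1 / real d)" by simp
      then show ?thesis by (simp add: field_simps)
    qed
    finally show ?thesis .
  qed
  have "(BC ^ d)\<^sup>2 = (BC\<^sup>2) ^ d" by (simp add: power_mult[symmetric] mult.commute)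
  also have "\<dots> \<ge> (1 - 1 / (2 * d)) ^ d"
    using BC2 d by (intro power_mono) (auto simp: divide_simps)
  also have "(1 - 1 / (2 * d)) ^ d \<ge> 1 - d * (1 / (2 * d))"
    using d by (intro bernoulli_le) (auto simp: divide_simps)
  finally have bd: "(BC ^ d)\<^sup>2 \<ge> 1/2" using d by simp
  have "l0 * (BC ^ d)\<^sup>2 / 2 \<le> (\<Sum>u\<in>U. (\<Prod>i<d. fw p1 (u i)) * G1 u) + (\<Sum>u\<in>U. (\<Prod>i<d. fw (1/2) (u i)) * G2 u)"
    unfolding bc[symmetric]
    by (rule lecam) (use p1b nQ sQ g1 g2 g l0 in \<open>auto simp: U_def intro!: finite_PiE\<close>)
  moreover have "l0 / 4 \<le> l0 * (BC ^ d)\<^sup>2 / 2" using mult_left_mono[OF bd l0] by simp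
  ultimately show ?thesis unfolding U_def by linarith
qed



lemma sum_PiE_pair:
  fixes H :: "('i \<Rightarrow> 'a \<times> 'b) \<Rightarrow> real"
  assumes I: "finite I" and A: "finite A" and B: "finite B"
  shows "(\<Sum>u\<in>I \<rightarrow>\<^sub>E A \<times> B. H u) = (\<Sum>\<alpha>\<in>I \<rightarrow>\<^sub>E A. \<Sum>\<beta>\<in>I \<rightarrow>\<^sub>E B. H (restrict (\<lambda>i. (\<alpha> i, \<beta> i)) I))"
proof -
  have "(\<Sum>u\<in>I \<rightarrow>\<^sub>E A \<times> B. H u) = (\<Sum>p\<in>(I \<rightarrow>\<^sub>E A) \<times> (I \<rightarrow>\<^sub>E B). H (restrict (\<lambda>i. (fst p i, snd p i)) I))"
  proof (rule sum.reindex_bij_witness[where i="\<lambda>p. restrict (\<lambda>i. (fst p i, snd p i)) I"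
        and j="\<lambda>u. (restrict (\<lambda>i. fst (u i)) I, restrict (\<lambda>i. snd (u i)) I)"])
    fix u assume u: "u \<in> I \<rightarrow>\<^sub>E A \<times> B"
    show "restrict (\<lambda>i. (fst ((restrict (\<lambda>i. fst (u i)) I, restrict (\<lambda>i. snd (u i)) I)) i, snd ((restrict (\<lambda>i. fst (u i)) I, restrict (\<lambda>i. snd (u i)) I)) i)) I = u"
      using u by (auto simp: PiE_iff extensional_def)
    show "(restrict (\<lambda>i. fst (u i)) I, restrict (\<lambda>i. snd (u i)) I) \<in> (I \<rightarrow>\<^sub>E A) \<times> (I \<rightarrow>\<^sub>E B)"
      using u by (auto simp: PiE_iff)
  next
    fix p assume p: "p \<in> (I \<rightarrow>\<^sub>E A) \<times> (I \<rightarrow>\<^sub>E B)"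
    show "(restrict (\<lambda>i. fst (restrict (\<lambda>i. (fst p i, snd p i)) I i)) I, restrict (\<lambda>i. snd (restrict (\<lambda>i. (fst p i, snd p i)) I i)) I) = p"
      using p by (cases p) (auto simp: PiE_iff extensional_def)
    show "restrict (\<lambda>i. (fst p i, snd p i)) I \<in> I \<rightarrow>\<^sub>E A \<times> B"
      using p by (auto simp: PiE_iff)
  qed (auto simp: PiE_iff extensional_def fun_eq_iff intro!: arg_cong[where f=H])
  also have "\<dots> = (\<Sum>\<alpha>\<in>I \<rightarrow>\<^sub>E A. \<Sum>\<beta>\<in>I \<rightarrow>\<^sub>E B. H (restrict (\<lambda>i. (\<alpha> i, \<beta> i)) I))"
    by (simp add: sum.cartesian_product split_beta)
  finally show ?thesis .
qed

lemma markov_card: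
  fixes d :: nat
  assumes q: "0 \<le> q" "q \<le> 1"
  shows "(\<Sum>\<alpha>\<in>{..<d} \<rightarrow>\<^sub>E {0::nat,1,2}. (\<Prod>j<d. fw q (\<alpha> j)) * real (card {i\<in>{..<d}. \<alpha> i \<noteq> 0})) = real d * q"
proof -
  have c: "real (card {i\<in>{..<d}. \<alpha> i \<noteq> 0}) = (\<Sum>i<d. if \<alpha> i \<noteq> 0 then 1 else 0)" for \<alpha> :: "nat \<Rightarrow> nat"
    by (simp add: sum.If_cases Int_def)
  have one: "(\<Sum>\<alpha>\<in>{..<d} \<rightarrow>\<^sub>E {0::nat,1,2}. (\<Prod>j<d. fw q (\<alpha> j)) * (if \<alpha> i \<noteq> 0 then 1 else 0)) = q" if i: "i < d" for i
  proof -
    define g where "g = (\<lambda>j x. if j = i then fw q x * (if x \<noteq> 0 then 1 else 0) else fw q x)"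
    have "(\<Sum>\<alpha>\<in>{..<d} \<rightarrow>\<^sub>E {0::nat,1,2}. (\<Prod>j<d. fw q (\<alpha> j)) * (if \<alpha> i \<noteq> 0 then 1 else 0))
        = (\<Sum>\<alpha>\<in>{..<d} \<rightarrow>\<^sub>E {0::nat,1,2}. \<Prod>j<d. g j (\<alpha> j))"
    proof (rule sum.cong[OF refl])
      fix \<alpha> :: "nat \<Rightarrow> nat"
      have "(\<Prod>j<d. g j (\<alpha> j)) = g i (\<alpha> i) * (\<Prod>j\<in>{..<d} - {i}. g j (\<alpha> j))"
        using i by (subst prod.remove[of _ i]) auto
      also have "(\<Prod>j\<in>{..<d} - {i}. g j (\<alpha> j)) = (\<Prod>j\<in>{..<d} - {i}. fw q (\<alpha> j))"
        by (rule prod.cong) (auto simp: g_def)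
      also have "(\<Prod>j<d. fw q (\<alpha> j)) = fw q (\<alpha> i) * (\<Prod>j\<in>{..<d} - {i}. fw q (\<alpha> j))"
        using i by (subst prod.remove[of _ i]) auto
      ultimately show "(\<Prod>j<d. fw q (\<alpha> j)) * (if \<alpha> i \<noteq> 0 then 1 else 0) = (\<Prod>j<d. g j (\<alpha> j))"
        by (simp add: g_def)
    qed
    also have "\<dots> = (\<Prod>j<d. \<Sum>x\<in>{0::nat,1,2}. g j x)"
      by (rule prod_sum_PiE[symmetric]) auto
    also have "\<dots> = (\<Sum>x\<in>{0::nat,1,2}. g i x) * (\<Prod>j\<in>{..<d} - {i}. \<Sum>x\<in>{0::nat,1,2}. g j x)"
      using i by (subst prod.remove[of _ i]) auto
    also have "(\<Prod>j\<in>{..<d} - {i}. \<Sum>x\<in>{0::nat,1,2}. g j x) = 1"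
      by (rule prod.neutral) (auto simp: g_def fw_def)
    also have "(\<Sum>x\<in>{0::nat,1,2}. g i x) = q" by (simp add: g_def fw_def)
    finally show ?thesis by simp
  qed
  have "(\<Sum>\<alpha>\<in>{..<d} \<rightarrow>\<^sub>E {0::nat,1,2}. (\<Prod>j<d. fw q (\<alpha> j)) * real (card {i\<in>{..<d}. \<alpha> i \<noteq> 0}))
     = (\<Sum>\<alpha>\<in>{..<d} \<rightarrow>\<^sub>E {0::nat,1,2}. \<Sum>i<d. (\<Prod>j<d. fw q (\<alpha> j)) * (if \<alpha> i \<noteq> 0 then 1 else 0))"
    by (rule sum.cong[OF refl], subst c, simp add: sum_distrib_left)
  also have "\<dots> = (\<Sum>i<d. \<Sum>\<alpha>\<in>{..<d} \<rightarrow>\<^sub>E {0::nat,1,2}. (\<Prod>j<d. fw q (\<alpha> j)) * (if \<alpha> i \<noteq> 0 then 1 else 0))"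
    by (rule sum.swap)
  also have "\<dots> = (\<Sum>i<d. q)" by (rule sum.cong[OF refl], rule one) simp
  finally show ?thesis by simp
qed



definition wv :: "real \<Rightarrow> nat \<Rightarrow> real" where
  "wv A j = (if j = 0 then 0 else if j = 1 then A else - A)"

definition cv :: "nat \<Rightarrow> real" where
  "cv j = (if j = 0 then 1 else - 1)"

lemma sparse_bound:
  fixes d s :: nat and A q l0 :: real and Ga Gb :: "(nat \<Rightarrow> real) \<Rightarrow> real"
  assumes s: "1 \<le> s" "s \<le> d" and q: "q = s / (2 * d)"
    and g1: "\<And>y. Ga y \<ge> 0" and g2: "\<And>y. Gb y \<ge> 0" and g: "\<And>y. Ga y + Gb y \<ge> l0" and l0: "l0 \<ge> 0"
  shows "l0 / 4 \<le> (\<Sum>u\<in>{..<d} \<rightarrow>\<^sub>E {0::nat,1,2} \<times> {0::nat,1}. (\<Prod>i<d. fw q (fst (u i)) * (1/2)) * Ga (restrict (\<lambda>i. wv A (fst (u i)) + cv (snd (u i))) {..<d}))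
      \<or> (\<exists>\<alpha>\<in>{..<d} \<rightarrow>\<^sub>E {0::nat,1,2}. card {i\<in>{..<d}. \<alpha> i \<noteq> 0} \<le> s \<and>
           l0 / 4 \<le> (\<Sum>\<beta>\<in>{..<d} \<rightarrow>\<^sub>E {0::nat,1}. (\<Prod>i<d. 1/2) * Gb (restrict (\<lambda>i. wv A (\<alpha> i) + cv (\<beta> i)) {..<d})))"
    (is "_ \<le> ?R1 \<or> _")
proof (rule disjCI)
  define Ws where "Ws = {..<d} \<rightarrow>\<^sub>E {0::nat,1,2}"
  define Cs where "Cs = {..<d} \<rightarrow>\<^sub>E {0::nat,1}"
  define wA where "wA = (\<lambda>\<alpha>. \<Prod>i<d. fw q (\<alpha> i))"
  define cB where "cB = (\<lambda>\<beta>::nat\<Rightarrow>nat. \<Prod>i<(d::nat). (1/2::real))"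
  define Y where "Y = (\<lambda>\<alpha> \<beta>. restrict (\<lambda>i. wv A (\<alpha> i) + cv (\<beta> i)) {..<d})"
  define r where "r = (\<lambda>\<alpha>. \<Sum>\<beta>\<in>Cs. cB \<beta> * Gb (Y \<alpha> \<beta>))"
  define r' where "r' = (\<lambda>\<alpha>. \<Sum>\<beta>\<in>Cs. cB \<beta> * min (Gb (Y \<alpha> \<beta>)) l0)"
  define Sp where "Sp = {\<alpha>\<in>Ws. card {i\<in>{..<d}. \<alpha> i \<noteq> 0} \<le> s}"
  assume "\<not> (\<exists>\<alpha>\<in>{..<d} \<rightarrow>\<^sub>E {0::nat,1,2}. card {i\<in>{..<d}. \<alpha> i \<noteq> 0} \<le> s \<and>
           l0 / 4 \<le> (\<Sum>\<beta>\<in>{..<d} \<rightarrow>\<^sub>E {0::nat,1}. (\<Prod>i<d. 1/2) * Gb (restrict (\<lambda>i. wv A (\<alpha> i) + cv (\<beta> i)) {..<d})))"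
  then have small: "\<And>\<alpha>. \<alpha> \<in> Sp \<Longrightarrow> r \<alpha> < l0 / 4"
    unfolding Sp_def Ws_def r_def Cs_def cB_def Y_def by force
  have dpos: "d > 0" using s by simp
  have q01: "0 \<le> q" "q \<le> 1/2" using s unfolding q by (auto simp: divide_simps)
  have finW: "finite Ws" "finite Cs" unfolding Ws_def Cs_def by (auto intro!: finite_PiE)
  have wA0: "wA \<alpha> \<ge> 0" for \<alpha> unfolding wA_def using q01 by (intro prod_nonneg) (auto simp: fw_def)
  have cB0: "cB \<beta> \<ge> 0" for \<beta> unfolding cB_def by simp
  have swA: "sum wA Ws = 1" unfolding wA_def Ws_def by (subst prod_sum_PiE[symmetric]) (auto simp: fw_def)
  have scB: "sum cB Cs = 1" unfolding cB_def Cs_def by (subst prod_sum_PiE[symmetric]) auto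
  have pair: "(\<Sum>u\<in>{..<d} \<rightarrow>\<^sub>E {0::nat,1,2} \<times> {0::nat,1}. (\<Prod>i<d. fw q (fst (u i)) * (1/2)) * K (restrict (\<lambda>i. wv A (fst (u i)) + cv (snd (u i))) {..<d}))
      = (\<Sum>\<alpha>\<in>Ws. \<Sum>\<beta>\<in>Cs. wA \<alpha> * cB \<beta> * K (Y \<alpha> \<beta>))" for K
  proof -
    have "(\<Sum>u\<in>{..<d} \<rightarrow>\<^sub>E {0::nat,1,2} \<times> {0::nat,1}. (\<Prod>i<d. fw q (fst (u i)) * (1/2)) * K (restrict (\<lambda>i. wv A (fst (u i)) + cv (snd (u i))) {..<d}))
      = (\<Sum>\<alpha>\<in>Ws. \<Sum>\<beta>\<in>Cs. (\<Prod>i<d. fw q (fst (restrict (\<lambda>i. (\<alpha> i, \<beta> i)) {..<d} i)) * (1/2)) * K (restrict (\<lambda>i. wv A (fst (restrict (\<lambda>i. (\<alpha> i, \<beta> i)) {..<d} i)) + cv (snd (restrict (\<lambda>i. (\<alpha> i, \<beta> i)) {..<d} i))) {..<d}))"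
      unfolding Ws_def Cs_def by (rule sum_PiE_pair) auto
    also have "\<dots> = (\<Sum>\<alpha>\<in>Ws. \<Sum>\<beta>\<in>Cs. wA \<alpha> * cB \<beta> * K (Y \<alpha> \<beta>))"
    proof (intro sum.cong refl)
      fix \<alpha> \<beta> :: "nat \<Rightarrow> nat"
      have "(\<Prod>i<d. fw q (fst (restrict (\<lambda>i. (\<alpha> i, \<beta> i)) {..<d} i)) * (1/2)) = (\<Prod>i<d. fw q (\<alpha> i) * (1/2))"
        by (rule prod.cong) auto
      also have "\<dots> = wA \<alpha> * cB \<beta>" unfolding wA_def cB_def by (rule prod.distrib)
      finally have 1: "(\<Prod>i<d. fw q (fst (restrict (\<lambda>i. (\<alpha> i, \<beta> i)) {..<d} i)) * (1/2)) = wA \<alpha> * cB \<beta>" .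
      have 2: "restrict (\<lambda>i. wv A (fst (restrict (\<lambda>i. (\<alpha> i, \<beta> i)) {..<d} i)) + cv (snd (restrict (\<lambda>i. (\<alpha> i, \<beta> i)) {..<d} i))) {..<d} = Y \<alpha> \<beta>"
        unfolding Y_def by (rule ext) auto
      show "(\<Prod>i<d. fw q (fst (restrict (\<lambda>i. (\<alpha> i, \<beta> i)) {..<d} i)) * (1/2)) * K (restrict (\<lambda>i. wv A (fst (restrict (\<lambda>i. (\<alpha> i, \<beta> i)) {..<d} i)) + cv (snd (restrict (\<lambda>i. (\<alpha> i, \<beta> i)) {..<d} i))) {..<d}) =
         wA \<alpha> * cB \<beta> * K (Y \<alpha> \<beta>)" unfolding 1 2 ..
    qed
    finally show ?thesis .
  qed
  define X1 where "X1 = (\<Sum>\<alpha>\<in>Ws. \<Sum>\<beta>\<in>Cs. wA \<alpha> * cB \<beta> * min (Ga (Y \<alpha> \<beta>)) l0)"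
  define X2 where "X2 = (\<Sum>\<alpha>\<in>Ws. \<Sum>\<beta>\<in>Cs. wA \<alpha> * cB \<beta> * min (Gb (Y \<alpha> \<beta>)) l0)"
  have X12: "l0 \<le> X1 + X2"
  proof -
    have "l0 = (\<Sum>\<alpha>\<in>Ws. \<Sum>\<beta>\<in>Cs. wA \<alpha> * cB \<beta> * l0)"
      by (simp add: sum_distrib_right[symmetric] sum_distrib_left[symmetric] swA scB)
    also have "\<dots> \<le> (\<Sum>\<alpha>\<in>Ws. \<Sum>\<beta>\<in>Cs. wA \<alpha> * cB \<beta> * (min (Ga (Y \<alpha> \<beta>)) l0 + min (Gb (Y \<alpha> \<beta>)) l0))"
    proof (intro sum_mono mult_left_mono)
      fix \<alpha> \<beta> :: "nat \<Rightarrow> nat" show "l0 \<le> min (Ga (Y \<alpha> \<beta>)) l0 + min (Gb (Y \<alpha> \<beta>)) l0"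
        using g[of "Y \<alpha> \<beta>"] g1[of "Y \<alpha> \<beta>"] g2[of "Y \<alpha> \<beta>"] using l0 by (auto simp: min_def)
      show "0 \<le> wA \<alpha> * cB \<beta>" using wA0 cB0 by simp
    qed
    also have "\<dots> = X1 + X2" unfolding X1_def X2_def
      by (simp add: sum.distrib[symmetric] distrib_left)
    finally show ?thesis .
  qed
  have X1R: "X1 \<le> ?R1"
    unfolding pair X1_def
    by (intro sum_mono mult_left_mono) (auto intro: mult_nonneg_nonneg wA0 cB0)
  have X2r: "X2 = (\<Sum>\<alpha>\<in>Ws. wA \<alpha> * r' \<alpha>)"
    unfolding X2_def r'_def by (simp add: sum_distrib_left mult.assoc)
  have r'r: "r' \<alpha> \<le> r \<alpha>" for \<alpha> unfolding r'_def r_def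
    by (intro sum_mono mult_left_mono) (auto simp: cB0)
  have r'l: "r' \<alpha> \<le> l0" for \<alpha>
  proof -
    have "r' \<alpha> \<le> (\<Sum>\<beta>\<in>Cs. cB \<beta> * l0)" unfolding r'_def
      by (intro sum_mono mult_left_mono) (auto simp: cB0)
    also have "\<dots> = l0" by (simp add: sum_distrib_right[symmetric] scB)
    finally show ?thesis .
  qed
  have r'0: "r' \<alpha> \<ge> 0" for \<alpha> unfolding r'_def using cB0 g2 l0 by (intro sum_nonneg) auto
  have spl: "(\<Sum>\<alpha>\<in>Ws. wA \<alpha> * r' \<alpha>) = (\<Sum>\<alpha>\<in>Sp. wA \<alpha> * r' \<alpha>) + (\<Sum>\<alpha>\<in>Ws - Sp. wA \<alpha> * r' \<alpha>)"
  proof -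
    have "Sp \<subseteq> Ws" unfolding Sp_def by auto
    from sum.subset_diff[OF this finW(1), of "\<lambda>\<alpha>. wA \<alpha> * r' \<alpha>"] show ?thesis by simp
  qed
  have sp: "(\<Sum>\<alpha>\<in>Sp. wA \<alpha> * r' \<alpha>) \<le> l0 / 4"
  proof -
    have "(\<Sum>\<alpha>\<in>Sp. wA \<alpha> * r' \<alpha>) \<le> (\<Sum>\<alpha>\<in>Sp. wA \<alpha> * (l0 / 4))"
    proof (intro sum_mono mult_left_mono)
      fix \<alpha> assume "\<alpha> \<in> Sp"
      then show "r' \<alpha> \<le> l0 / 4" using small[of \<alpha>] r'r[of \<alpha>] by linarith
    qed (simp add: wA0)
    also have "\<dots> = (\<Sum>\<alpha>\<in>Sp. wA \<alpha>) * (l0 / 4)" by (simp add: sum_distrib_right)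
    also have "(\<Sum>\<alpha>\<in>Sp. wA \<alpha>) \<le> 1"
      using swA sum_mono2[OF finW(1), of Sp wA] wA0 by (auto simp: Sp_def)
    then have "(\<Sum>\<alpha>\<in>Sp. wA \<alpha>) * (l0 / 4) \<le> 1 * (l0 / 4)" using l0 by (intro mult_right_mono) auto
    finally show ?thesis by simp
  qed
  have nsp: "(\<Sum>\<alpha>\<in>Ws - Sp. wA \<alpha> * r' \<alpha>) \<le> l0 / 2"
  proof -
    have "(\<Sum>\<alpha>\<in>Ws - Sp. wA \<alpha> * r' \<alpha>) \<le> (\<Sum>\<alpha>\<in>Ws - Sp. wA \<alpha> * (l0 * (real (card {i\<in>{..<d}. \<alpha> i \<noteq> 0}) / (s + 1))))"
    proof (intro sum_mono mult_left_mono)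
      fix \<alpha> assume a: "\<alpha> \<in> Ws - Sp"
      then have "real s + 1 \<le> real (card {i\<in>{..<d}. \<alpha> i \<noteq> 0})" unfolding Sp_def by auto
      then have "1 \<le> real (card {i\<in>{..<d}. \<alpha> i \<noteq> 0}) / (s + 1)" by (simp add: divide_simps)
      then have "l0 * 1 \<le> l0 * (real (card {i\<in>{..<d}. \<alpha> i \<noteq> 0}) / (s + 1))" using l0 by (rule mult_left_mono)
      then show "r' \<alpha> \<le> l0 * (real (card {i\<in>{..<d}. \<alpha> i \<noteq> 0}) / (s + 1))" using r'l[of \<alpha>] by simp
    qed (simp add: wA0)
    also have "\<dots> \<le> (\<Sum>\<alpha>\<in>Ws. wA \<alpha> * (l0 * (real (card {i\<in>{..<d}. \<alpha> i \<noteq> 0}) / (s + 1))))"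
      using l0 wA0 by (intro sum_mono2 finW) auto
    also have "\<dots> = l0 / (s + 1) * (\<Sum>\<alpha>\<in>Ws. wA \<alpha> * real (card {i\<in>{..<d}. \<alpha> i \<noteq> 0}))"
      by (simp add: sum_distrib_left mult_ac)
    also have "(\<Sum>\<alpha>\<in>Ws. wA \<alpha> * real (card {i\<in>{..<d}. \<alpha> i \<noteq> 0})) = real d * q"
      unfolding Ws_def wA_def by (rule markov_card) (use q01 in auto)
    also have "l0 / (s + 1) * (real d * q) = l0 * (s / (2 * (s + 1)))"
      using dpos unfolding q by (simp add: field_simps)
    also have "\<dots> \<le> l0 * (1/2)" using l0 by (intro mult_left_mono) (auto simp: divide_simps)
    finally show ?thesis by simp
  qed
  show "l0 / 4 \<le> ?R1" using X12 X1R X2r spl sp nsp by linarith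
qed



lemma phi_pos:
  assumes "1 \<le> s" "s \<le> d"
  shows "phi_exp a s d > 0"
  using assms unfolding phi_exp_def by (auto simp: less_max_iff_disj)

lemma phi_sparse_bound:
  fixes a :: real and s d :: nat
  assumes a: "a > 0" and s: "1 \<le> s" "s \<le> d"
  shows "real s / real d * (ln (exp 1 * real d / real s)) powr (2 / a) \<le> exp 1 * (2 / a) powr (2 / a)"
proof -
  define b where "b = 2 / a"
  define u where "u = ln (exp 1 * real d / real s)"
  have b: "b > 0" using a by (simp add: b_def)
  have sd: "real s > 0" "real d > 0" "real s \<le> real d" using s by auto
  have u: "u = 1 + ln (real d / real s)" unfolding u_def using sd by (simp add: ln_mult ln_div)
  have u1: "u \<ge> 1" using sd by (simp add: u)
  have "u / b \<le> exp (u / b)" using exp_ge_add_one_self[of "u / b"] by linarith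
  then have "u \<le> b * exp (u / b)" using b by (simp add: divide_simps mult.commute)
  then have "u powr b \<le> (b * exp (u / b)) powr b" using u1 b by (intro powr_mono2) auto
  also have "\<dots> = b powr b * exp u" using b by (simp add: powr_mult exp_powr_real)
  finally have 1: "u powr b \<le> b powr b * exp u" .
  have "exp u = exp 1 * (real d / real s)" using sd by (simp add: u exp_add)
  then have "real s / real d * (u powr b) \<le> real s / real d * (b powr b * (exp 1 * (real d / real s)))"
    using 1 sd by (intro mult_left_mono) auto
  also have "\<dots> = exp 1 * b powr b" using sd by (simp add: field_simps)
  finally show ?thesis unfolding u_def b_def .
qed

lemma phi_bound:
  fixes a :: real and s d :: nat
  assumes a: "a > 0" and s: "1 \<le> s" "s \<le> d"
  shows "phi_exp a s d \<le> max 1 (exp 1 * (2 / a) powr (2 / a))"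
proof -
  have "1 / sqrt (real d) \<le> 1" using s by (auto simp: divide_simps)
  then show ?thesis unfolding phi_exp_def using phi_sparse_bound[OF assms] by auto
qed

lemma sep:
  fixes s1 s2 g t :: real
  assumes g: "g > 0" and s2: "s2 > 0" and s1: "s1 = (1 + g) * s2"
  shows "min g 1 / 4 \<le> \<bar>t / s1 - 1\<bar> \<or> min g 1 / 4 \<le> \<bar>t / s2 - 1\<bar>"
proof (rule ccontr)
  define v where "v = t / s1"
  have tv: "t / s2 = (1 + g) * v" 
  proof -
    have "s2 + g * s2 > 0" using s2 g by (simp add: add_pos_pos)
    then show ?thesis unfolding v_def s1 using s2 g by (simp add: field_simps)
  qed
  assume "\<not> ?thesis"
  then have h: "\<bar>v - 1\<bar> < min g 1 / 4" "\<bar>(1 + g) * v - 1\<bar> < min g 1 / 4" unfolding v_def tv by auto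
  have e: "g * v = ((1 + g) * v - 1) - (v - 1)" by (simp add: algebra_simps)
  have "g * v < min g 1 / 2" using h abs_le_D1[of "(1 + g) * v - 1"] abs_ge_minus_self[of "v - 1"] unfolding e by linarith
  moreover have v: "v > 3 / 4" using h(1) abs_ge_minus_self[of "v - 1"] min.cobounded2[of g 1] by linarith
  have "g * v \<ge> g * (3/4)" using g v by (intro mult_left_mono) auto
  ultimately show False using g min.cobounded1[of g 1] by linarith
qed

lemma Gsum:
  fixes ell :: "real \<Rightarrow> real"
  assumes ell: "ell \<in> loss_class" and x0: "0 \<le> x0"
    and g: "g > 0" and s2: "s2 > 0" and s1: "s1 = (1 + g) * s2" and k: "x0 \<le> k * (min g 1 / 4)" "k \<ge> 0"
  shows "ell x0 \<le> ell (k * \<bar>t / s1 - 1\<bar>) + ell (k * \<bar>t / s2 - 1\<bar>)"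
proof -
  have n1: "0 \<le> ell (k * \<bar>t / s1 - 1\<bar>)" "0 \<le> ell (k * \<bar>t / s2 - 1\<bar>)"
    using k by (auto intro!: loss_nn[OF ell])
  from sep[OF g s2 s1, of t] show ?thesis
  proof
    assume "min g 1 / 4 \<le> \<bar>t / s1 - 1\<bar>"
    then have "x0 \<le> k * \<bar>t / s1 - 1\<bar>" using k by (meson mult_left_mono order.trans)
    then have "ell x0 \<le> ell (k * \<bar>t / s1 - 1\<bar>)" by (rule loss_mono[OF ell x0])
    then show ?thesis using n1 by linarith
  next
    assume "min g 1 / 4 \<le> \<bar>t / s2 - 1\<bar>"
    then have "x0 \<le> k * \<bar>t / s2 - 1\<bar>" using k by (meson mult_left_mono order.trans)
    then have "ell x0 \<le> ell (k * \<bar>t / s2 - 1\<bar>)" by (rule loss_mono[OF ell x0])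
    then show ?thesis using n1 by linarith
  qed
qed

lemma SUP_ge:
  assumes "P \<in> noise_class a \<tau>" "\<sigma> \<in> {0<..}" "\<theta> \<in> sparse_vecs d s"
    and "x \<le> risk ell a c s d T P \<sigma> \<theta>"
  shows "x \<le> (SUP P \<in> noise_class a \<tau>. SUP \<sigma> \<in> {0<..}. SUP \<theta> \<in> sparse_vecs d s. risk ell a c s d T P \<sigma> \<theta>)"
  by (rule SUP_upper2[OF assms(1)], rule SUP_upper2[OF assms(2)], rule SUP_upper2[OF assms(3)]) (rule assms(4))



lemma exp1_le4: "exp (1::real) \<le> 4"
proof -
  have "exp (1/2::real) \<le> 2" using real_exp_bound_lemma[of "1/2"] by simp
  then have "exp (1/2::real) * exp (1/2) \<le> 2 * 2" by (intro mult_mono) auto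
  then show ?thesis by (simp add: exp_add[symmetric])
qed

definition vv :: "nat \<Rightarrow> real" where "vv j = (if j = 0 then 0 else if j = 1 then 1 else - 1)"

lemma wts_fw: "0 \<le> p \<Longrightarrow> p \<le> 1 \<Longrightarrow> wts {0::nat,1,2} (fw p)"
  by unfold_locales (auto simp: fw_def)

lemma dense_noise:
  assumes p: "1/2 \<le> p" "p \<le> 1"
  shows "Dm {0::nat,1,2} (fw p) (\<lambda>j. vv j / sqrt p) \<in> noise_class a \<tau>"
proof -
  interpret wts "{0::nat,1,2}" "fw p" using p by (intro wts_fw) auto
  have sp: "sqrt p \<ge> 1/2"
  proof -
    have "sqrt (1/4) \<le> sqrt p" using p by (intro real_sqrt_le_mono) auto
    moreover have "sqrt (1/4::real) = 1/2" by (simp add: real_sqrt_divide)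
    ultimately show ?thesis by simp
  qed
  have "sqrt p > 0" using p by simp
  show ?thesis
  proof (rule Dm_noise)
    show "(\<Sum>y\<in>{0::nat,1,2}. fw p y * (vv y / sqrt p)) = 0" by (simp add: fw_def vv_def)
    show "(\<Sum>y\<in>{0::nat,1,2}. fw p y * (vv y / sqrt p)\<^sup>2) = 1"
      using p by (simp add: fw_def vv_def power_divide)
    fix t :: real assume t: "t \<ge> 2"
    have "{y \<in> {0::nat,1,2}. vv y / sqrt p \<in> {x. \<bar>x\<bar> > t}} = {}"
    proof -
      have "\<bar>vv y / sqrt p\<bar> \<le> t" for y
      proof -
        have "\<bar>vv y / sqrt p\<bar> \<le> 1 / sqrt p" using \<open>sqrt p > 0\<close>
          by (auto simp: vv_def abs_divide divide_right_mono)
        also have "\<dots> \<le> 2" using sp \<open>sqrt p > 0\<close> by (simp add: divide_simps)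
        finally show ?thesis using t by simp
      qed
      then show ?thesis by (auto simp: not_less)
    qed
    note E = this
    show "(\<Sum>y\<in>{y \<in> {0::nat,1,2}. vv y / sqrt p \<in> {x. \<bar>x\<bar> > t}}. fw p y) \<le> 2 * exp (- ((t / \<tau>) powr a))"
      unfolding E by simp
  qed
qed

lemma wts_core: "wts {0::nat,1} (\<lambda>_. 1/2)"
  by unfold_locales auto

lemma core_noise: "Dm {0::nat,1} (\<lambda>_. 1/2) cv \<in> noise_class a \<tau>"
proof -
  interpret wts "{0::nat,1}" "\<lambda>_. 1/2" by (rule wts_core)
  show ?thesis
  proof (rule Dm_noise)
    show "(\<Sum>y\<in>{0::nat,1}. 1/2 * cv y) = 0" by (simp add: cv_def)
    show "(\<Sum>y\<in>{0::nat,1}. 1/2 * (cv y)\<^sup>2) = 1" by (simp add: cv_def)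
    fix t :: real assume t: "t \<ge> 2"
    have E: "{y \<in> {0::nat,1}. cv y \<in> {x. \<bar>x\<bar> > t}} = {}" using t by (auto simp: cv_def)
    show "(\<Sum>y\<in>{y \<in> {0::nat,1}. cv y \<in> {x. \<bar>x\<bar> > t}}. 1/2) \<le> 2 * exp (- ((t / \<tau>) powr a))" unfolding E by simp
  qed
qed

definition f1 :: "real \<Rightarrow> nat \<times> nat \<Rightarrow> real" where "f1 q p = fw q (fst p) * (1/2)"

lemma wts_f1: "0 \<le> q \<Longrightarrow> q \<le> 1 \<Longrightarrow> wts ({0::nat,1,2} \<times> {0::nat,1}) (f1 q)"
proof unfold_locales
  assume "0 \<le> q" "q \<le> 1"
  then show "\<And>x. x \<in> {0::nat,1,2} \<times> {0::nat,1} \<Longrightarrow> 0 \<le> f1 q x" by (auto simp: f1_def fw_def)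
  show "sum (f1 q) ({0::nat,1,2} \<times> {0::nat,1}) = 1"
    by (simp add: sum.cartesian_product[symmetric] f1_def fw_def)
qed auto

lemma sum_S1: "(\<Sum>p\<in>{0::nat,1,2} \<times> {0::nat,1}. g p) = (\<Sum>a\<in>{0::nat,1,2}. \<Sum>b\<in>{0::nat,1}. g (a, b))"
  by (simp add: sum.cartesian_product add_ac)

lemma sparse_noise:
  fixes A q \<sigma>1 M :: real
  assumes q: "0 \<le> q" "q \<le> 1" and A: "A > 0" and s1: "\<sigma>1 = sqrt (1 + q * A\<^sup>2)"
    and tail: "A \<le> 1/2 \<or> (A + 1 \<le> M \<and> (\<forall>t. 2 \<le> t \<longrightarrow> t < M \<longrightarrow> q \<le> 2 * exp (- ((t / \<tau>) powr a))))"
  shows "Dm ({0::nat,1,2} \<times> {0::nat,1}) (f1 q) (\<lambda>p. (wv A (fst p) + cv (snd p)) / \<sigma>1) \<in> noise_class a \<tau>"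
proof -
  interpret wts "{0::nat,1,2} \<times> {0::nat,1}" "f1 q" using q by (rule wts_f1)
  have s1p: "\<sigma>1 \<ge> 1" unfolding s1 using q by simp
  have s1sq: "\<sigma>1\<^sup>2 = 1 + q * A\<^sup>2" unfolding s1 using q by simp
  show ?thesis
  proof (rule Dm_noise)
    show "(\<Sum>y\<in>{0::nat,1,2} \<times> {0::nat,1}. f1 q y * ((wv A (fst y) + cv (snd y)) / \<sigma>1)) = 0"
    proof -
      have "(\<Sum>y\<in>{0::nat,1,2} \<times> {0::nat,1}. f1 q y * ((wv A (fst y) + cv (snd y)) / \<sigma>1)) = (\<Sum>y\<in>{0::nat,1,2} \<times> {0::nat,1}. f1 q y * (wv A (fst y) + cv (snd y))) / \<sigma>1"
        by (simp only: sum_divide_distrib times_divide_eq_right)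
      also have "(\<Sum>y\<in>{0::nat,1,2} \<times> {0::nat,1}. f1 q y * (wv A (fst y) + cv (snd y))) = 0"
        unfolding sum_S1 by (simp add: f1_def fw_def wv_def cv_def algebra_simps)
      finally show ?thesis by simp
    qed
    have "(\<Sum>y\<in>{0::nat,1,2} \<times> {0::nat,1}. f1 q y * ((wv A (fst y) + cv (snd y)) / \<sigma>1)\<^sup>2) = (1 + q * A\<^sup>2) / \<sigma>1\<^sup>2"
    proof -
      have "(\<Sum>y\<in>{0::nat,1,2} \<times> {0::nat,1}. f1 q y * ((wv A (fst y) + cv (snd y)) / \<sigma>1)\<^sup>2) = (\<Sum>y\<in>{0::nat,1,2} \<times> {0::nat,1}. f1 q y * (wv A (fst y) + cv (snd y))\<^sup>2) / \<sigma>1\<^sup>2"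
        by (simp only: sum_divide_distrib times_divide_eq_right power_divide)
      also have "(\<Sum>y\<in>{0::nat,1,2} \<times> {0::nat,1}. f1 q y * (wv A (fst y) + cv (snd y))\<^sup>2) = 1 + q * A\<^sup>2"
        unfolding sum_S1 by (simp add: f1_def fw_def wv_def cv_def algebra_simps power2_eq_square)
      finally show ?thesis .
    qed
    note M2 = this
    have "1 + q * A\<^sup>2 > 0" using q by (simp add: add_pos_nonneg)
    then show "(\<Sum>y\<in>{0::nat,1,2} \<times> {0::nat,1}. f1 q y * ((wv A (fst y) + cv (snd y)) / \<sigma>1)\<^sup>2) = 1"
      unfolding M2 s1sq by simp
    fix t :: real assume t: "t \<ge> 2"
    define Z where "Z = {y \<in> {0::nat,1,2} \<times> {0::nat,1}. (wv A (fst y) + cv (snd y)) / \<sigma>1 \<in> {x. \<bar>x\<bar> > t}}"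
    have hb: "\<bar>(wv A (fst y) + cv (snd y)) / \<sigma>1\<bar> \<le> \<bar>wv A (fst y) + cv (snd y)\<bar>" for y
    proof -
      have "\<bar>wv A (fst y) + cv (snd y)\<bar> / \<sigma>1 \<le> \<bar>wv A (fst y) + cv (snd y)\<bar> / 1"
        using s1p by (intro divide_left_mono) auto
      then show ?thesis using s1p by (simp add: abs_divide)
    qed
    have ab: "\<bar>wv A (fst y) + cv (snd y)\<bar> \<le> A + 1" for y
      using A by (auto simp: wv_def cv_def)
    from tail show "(\<Sum>y\<in>Z. f1 q y) \<le> 2 * exp (- ((t / \<tau>) powr a))"
    proof
      assume "A \<le> 1/2"
      then have "\<bar>(wv A (fst y) + cv (snd y)) / \<sigma>1\<bar> \<le> t" for y
        using hb[of y] ab[of y] t by linarith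
      then have "Z = {}" unfolding Z_def by (auto simp: not_less)
      then show ?thesis by simp
    next
      assume M: "A + 1 \<le> M \<and> (\<forall>t. 2 \<le> t \<longrightarrow> t < M \<longrightarrow> q \<le> 2 * exp (- ((t / \<tau>) powr a)))"
      show ?thesis
      proof (cases "Z = {}")
        case True then show ?thesis by simp
      next
        case False
        then obtain y where y: "y \<in> Z" by auto
        then have "t < M" unfolding Z_def using hb[of y] ab[of y] M by auto
        then have qb: "q \<le> 2 * exp (- ((t / \<tau>) powr a))" using M t by auto
        have Zs: "Z \<subseteq> {y \<in> {0::nat,1,2} \<times> {0::nat,1}. fst y \<noteq> 0}"
        proof
          fix z assume z: "z \<in> Z"
          have "fst z \<noteq> 0"
          proof
            assume "fst z = 0"
            then have "\<bar>(wv A (fst z) + cv (snd z)) / \<sigma>1\<bar> \<le> 1" using hb[of z] by (auto simp: wv_def cv_def)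
            then show False using z t unfolding Z_def by auto
          qed
          then show "z \<in> {y \<in> {0::nat,1,2} \<times> {0::nat,1}. fst y \<noteq> 0}" using z unfolding Z_def by auto
        qed
        have "(\<Sum>y\<in>Z. f1 q y) \<le> (\<Sum>y\<in>{y \<in> {0::nat,1,2} \<times> {0::nat,1}. fst y \<noteq> 0}. f1 q y)"
          by (rule sum_mono2[OF _ Zs]) (auto simp: fnn)
        also have "{y \<in> {0::nat,1,2} \<times> {0::nat,1}. fst y \<noteq> 0} = {1,2} \<times> {0,1}" by auto
        also have "(\<Sum>y\<in>{1::nat,2} \<times> {0::nat,1}. f1 q y) = q"
          by (simp add: sum.cartesian_product[symmetric] f1_def fw_def)
        finally show ?thesis using qb by simp
      qed
    qed
  qed
qed



lemma dense_case:
  fixes ell :: "real \<Rightarrow> real" and s d :: nat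
  assumes ell: "ell \<in> loss_class" and x0: "0 \<le> x0" and sd: "1 \<le> s" "s \<le> d"
    and T: "T \<in> borel_measurable (PiM {..<d} (\<lambda>_. borel))"
    and k: "c / phi_exp a s d \<ge> 0" and kx: "x0 \<le> c / phi_exp a s d * ((1 / sqrt d) / 4)"
  shows "\<exists>P\<in>noise_class a \<tau>. \<exists>\<sigma>\<in>{0<..}. \<exists>\<theta>\<in>sparse_vecs d s. ennreal (ell x0 / 8) \<le> risk ell a c s d T P \<sigma> \<theta>"
proof -
  define e where "e = 1 / sqrt (real d)"
  define p1 where "p1 = (1 + e) / 2"
  have d: "d \<ge> 1" using sd by simp
  have e: "0 < e" "e \<le> 1" using d by (auto simp: e_def divide_simps)
  have p1: "1/2 \<le> p1" "p1 \<le> 1" using e by (auto simp: p1_def)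
  define G where "G = (\<lambda>p u. ell (c / phi_exp a s d * \<bar>T (restrict (\<lambda>i. vv (u i)) {..<d}) / (sqrt p)\<^sup>2 - 1\<bar>))"
  have Gnn: "G p u \<ge> 0" for p u unfolding G_def by (rule loss_nn[OF ell], rule mult_nonneg_nonneg[OF k abs_ge_zero])
  have risk: "risk ell a c s d T (Dm {0::nat,1,2} (fw p) (\<lambda>j. vv j / sqrt p)) (sqrt p) (\<lambda>_. 0)
      = ennreal (\<Sum>u\<in>{..<d} \<rightarrow>\<^sub>E {0::nat,1,2}. (\<Prod>i<d. fw p (u i)) * G p u)" if p: "1/2 \<le> p" "p \<le> 1" for p
  proof -
    have sp: "sqrt p > 0" using p by simp
    have "risk ell a c s d T (Dm {0::nat,1,2} (fw p) (\<lambda>j. vv j / sqrt p)) (sqrt p) (\<lambda>_. 0)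
      = ennreal (\<Sum>u\<in>{..<d} \<rightarrow>\<^sub>E {0::nat,1,2}. (\<Prod>i<d. fw p (u i)) *
          ell (c / phi_exp a s d * \<bar>T (restrict (\<lambda>i. 0 + sqrt p * (vv (u i) / sqrt p)) {..<d}) / (sqrt p)\<^sup>2 - 1\<bar>))"
      by (rule wts.risk_Dm[OF wts_fw ell k sp T]) (use p in auto)
    also have "\<dots> = ennreal (\<Sum>u\<in>{..<d} \<rightarrow>\<^sub>E {0::nat,1,2}. (\<Prod>i<d. fw p (u i)) * G p u)"
      unfolding G_def using sp by simp
    finally show ?thesis .
  qed
  have gap: "(sqrt p1)\<^sup>2 = (1 + e) * (sqrt (1/2))\<^sup>2" using p1 by (simp add: p1_def)
  have gsum: "G p1 u + G (1/2) u \<ge> ell x0" for u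
    unfolding G_def
    by (rule Gsum[OF ell x0 e(1) _ gap]) (use e kx k in \<open>auto simp: e_def min_def\<close>)
  have "ell x0 / 4 \<le> (\<Sum>u\<in>{..<d} \<rightarrow>\<^sub>E {0,1,2}. (\<Prod>i<d. fw p1 (u i)) * G p1 u) + (\<Sum>u\<in>{..<d} \<rightarrow>\<^sub>E {0,1,2}. (\<Prod>i<d. fw (1/2) (u i)) * G (1/2) u)"
    by (rule dense_bound[OF d]) (use gsum Gnn loss_nn[OF ell x0] in \<open>auto simp: p1_def e_def\<close>)
  then have "ell x0 / 8 \<le> (\<Sum>u\<in>{..<d} \<rightarrow>\<^sub>E {0,1,2}. (\<Prod>i<d. fw p1 (u i)) * G p1 u) \<or>
             ell x0 / 8 \<le> (\<Sum>u\<in>{..<d} \<rightarrow>\<^sub>E {0,1,2}. (\<Prod>i<d. fw (1/2) (u i)) * G (1/2) u)" by linarith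
  moreover have z: "(\<lambda>_. 0) \<in> sparse_vecs d s" by (simp add: sparse_vecs_def)
  ultimately show ?thesis
  proof (elim disjE)
    assume h: "ell x0 / 8 \<le> (\<Sum>u\<in>{..<d} \<rightarrow>\<^sub>E {0,1,2}. (\<Prod>i<d. fw p1 (u i)) * G p1 u)"
    show ?thesis
    proof (intro bexI)
      show "ennreal (ell x0 / 8) \<le> risk ell a c s d T (Dm {0::nat,1,2} (fw p1) (\<lambda>j. vv j / sqrt p1)) (sqrt p1) (\<lambda>_. 0)"
        unfolding risk[OF p1] using h by (rule ennreal_leI)
    qed (use z dense_noise[OF p1, of a \<tau>] p1 in auto)
  next
    assume h: "ell x0 / 8 \<le> (\<Sum>u\<in>{..<d} \<rightarrow>\<^sub>E {0,1,2}. (\<Prod>i<d. fw (1/2) (u i)) * G (1/2) u)"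
    show ?thesis
    proof (intro bexI)
      show "ennreal (ell x0 / 8) \<le> risk ell a c s d T (Dm {0::nat,1,2} (fw (1/2)) (\<lambda>j. vv j / sqrt (1/2))) (sqrt (1/2)) (\<lambda>_. 0)"
      proof -
        have r2: "risk ell a c s d T (Dm {0::nat,1,2} (fw (1/2)) (\<lambda>j. vv j / sqrt (1/2))) (sqrt (1/2)) (\<lambda>_. 0)
          = ennreal (\<Sum>u\<in>{..<d} \<rightarrow>\<^sub>E {0::nat,1,2}. (\<Prod>i<d. fw (1/2) (u i)) * G (1/2) u)"
          by (rule risk) auto
        show ?thesis unfolding r2 using h by (rule ennreal_leI)
      qed
    qed (use z dense_noise[of "1/2" a \<tau>] in auto)
  qed
qed



lemma sparse_case:
  fixes ell :: "real \<Rightarrow> real" and s d :: nat and a \<tau> :: real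
  assumes ell: "ell \<in> loss_class" and x0: "0 \<le> x0" and a: "a > 0" and tau: "\<tau> > 0" and sd: "1 \<le> s" "s \<le> d"
    and T: "T \<in> borel_measurable (PiM {..<d} (\<lambda>_. borel))"
    and k: "c / phi_exp a s d \<ge> 0"
    and kx: "x0 \<le> c / phi_exp a s d * (min (\<tau>\<^sup>2 / 128 * (real s / real d * (ln (exp 1 * real d / real s)) powr (2 / a))) 1 / 4)"
  shows "\<exists>P\<in>noise_class a \<tau>. \<exists>\<sigma>\<in>{0<..}. \<exists>\<theta>\<in>sparse_vecs d s. ennreal (ell x0 / 8) \<le> risk ell a c s d T P \<sigma> \<theta>"
proof -
  define u where "u = ln (exp 1 * real d / real s)"
  define M where "M = \<tau> * u powr (1 / a)"
  define q where "q = real s / (2 * real d)"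
  define A where "A = (if M \<le> 4 then 1/2 else M - 1)"
  define g where "g = q * A\<^sup>2"
  define \<sigma>1 where "\<sigma>1 = sqrt (1 + q * A\<^sup>2)"
  define k where "k = c / phi_exp a s d"
  have sdr: "real s > 0" "real d > 0" "real s \<le> real d" using sd by auto
  have u: "u = 1 + ln (real d / real s)" unfolding u_def using sdr by (simp add: ln_mult ln_div)
  have u1: "u \<ge> 1" using sdr by (simp add: u)
  have q: "0 < q" "q \<le> 1/2" using sdr unfolding q_def by (auto simp: divide_simps)
  have M0: "M \<ge> 0" unfolding M_def using tau by simp
  have A0: "A > 0" unfolding A_def using M0 by auto
  have g0: "g > 0" unfolding g_def using q A0 by simp
  have MM: "M\<^sup>2 = \<tau>\<^sup>2 * u powr (2 / a)"
  proof -
    have "(u powr (1 / a))\<^sup>2 = u powr (2 / a)"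
      using u1 by (simp add: power2_eq_square powr_add[symmetric])
    then show ?thesis unfolding M_def by (simp add: power_mult_distrib)
  qed
  have gbig: "\<tau>\<^sup>2 / 128 * (real s / real d * u powr (2 / a)) \<le> g"
  proof -
    have "\<tau>\<^sup>2 / 128 * (real s / real d * u powr (2 / a)) = q * M\<^sup>2 / 64"
      unfolding MM q_def by (simp add: field_simps)
    also have "\<dots> \<le> g"
    proof (cases "M \<le> 4")
      case True
      then have "M\<^sup>2 \<le> 4\<^sup>2" using M0 by (intro power_mono) auto
      then have "q * M\<^sup>2 / 64 \<le> q * 16 / 64" using q by (intro divide_right_mono mult_left_mono) auto
      moreover have "g = q / 4" using True by (simp add: g_def A_def power2_eq_square)
      ultimately show ?thesis by simp
    next
      case False
      then have "A \<ge> 3 / 4 * M" by (simp add: A_def)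
      then have "A\<^sup>2 \<ge> (3 / 4 * M)\<^sup>2" using M0 by (intro power_mono) auto
      then have "q * A\<^sup>2 \<ge> q * ((3 / 4 * M)\<^sup>2)" using q by (intro mult_left_mono) auto
      moreover have "q * ((3 / 4 * M)\<^sup>2) \<ge> q * M\<^sup>2 / 64"
      proof -
        have "(3 / 4 * M)\<^sup>2 = 9 / 16 * M\<^sup>2" by (simp add: power2_eq_square)
        have qm: "q * M\<^sup>2 \<ge> 0" using q by simp
        have "(q * M\<^sup>2) * (1/64) \<le> (q * M\<^sup>2) * (9/16)" by (rule mult_left_mono) (use qm in auto)
        moreover have "q * ((3 / 4 * M)\<^sup>2) = (q * M\<^sup>2) * (9/16)" unfolding \<open>(3 / 4 * M)\<^sup>2 = 9 / 16 * M\<^sup>2\<close> by simp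
        ultimately show ?thesis by linarith
      qed
      ultimately show ?thesis by (simp add: g_def)
    qed
    finally show ?thesis .
  qed
  have kx': "x0 \<le> k * (min g 1 / 4)"
  proof -
    have "min (\<tau>\<^sup>2 / 128 * (real s / real d * u powr (2 / a))) 1 / 4 \<le> min g 1 / 4"
      using gbig by (auto simp: min_def)
    then have "k * (min (\<tau>\<^sup>2 / 128 * (real s / real d * u powr (2 / a))) 1 / 4) \<le> k * (min g 1 / 4)"
      using k unfolding k_def by (rule mult_left_mono)
    then show ?thesis using kx unfolding k_def u_def by linarith
  qed
  have s1: "\<sigma>1 > 0" "\<sigma>1\<^sup>2 = (1 + g) * 1\<^sup>2" unfolding \<sigma>1_def g_def using q by (auto simp: add_pos_nonneg)
  define G1 where "G1 = (\<lambda>y. ell (c / phi_exp a s d * \<bar>T y / \<sigma>1\<^sup>2 - 1\<bar>))"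
  define G2 where "G2 = (\<lambda>y. ell (c / phi_exp a s d * \<bar>T y / 1\<^sup>2 - 1\<bar>))"
  have G1n: "G1 y \<ge> 0" for y unfolding G1_def by (rule loss_nn[OF ell], rule mult_nonneg_nonneg[OF k abs_ge_zero])
  have G2n: "G2 y \<ge> 0" for y unfolding G2_def by (rule loss_nn[OF ell], rule mult_nonneg_nonneg[OF k abs_ge_zero])
  have Gs: "ell x0 \<le> G1 y + G2 y" for y
    unfolding G1_def G2_def k_def[symmetric]
    by (rule Gsum[OF ell x0 g0 _ s1(2) kx']) (use k in \<open>auto simp: k_def\<close>)
  have noise1: "Dm ({0::nat,1,2} \<times> {0::nat,1}) (f1 q) (\<lambda>p. (wv A (fst p) + cv (snd p)) / \<sigma>1) \<in> noise_class a \<tau>"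
  proof (rule sparse_noise[OF _ _ A0 \<sigma>1_def])
    show "0 \<le> q" "q \<le> 1" using q by auto
    show "A \<le> 1/2 \<or> (A + 1 \<le> M \<and> (\<forall>t. 2 \<le> t \<longrightarrow> t < M \<longrightarrow> q \<le> 2 * exp (- ((t / \<tau>) powr a))))"
    proof (cases "M \<le> 4")
      case True then show ?thesis by (simp add: A_def)
    next
      case False
      have "q \<le> 2 * exp (- ((t / \<tau>) powr a))" if t: "2 \<le> t" "t < M" for t
      proof -
        have "t / \<tau> \<le> u powr (1 / a)" using t tau unfolding M_def by (simp add: divide_simps mult.commute)
        then have "(t / \<tau>) powr a \<le> (u powr (1 / a)) powr a" using t tau a by (intro powr_mono2) auto
        also have "\<dots> = u" using u1 a by (simp add: powr_powr)
        finally have "exp (- u) \<le> exp (- ((t / \<tau>) powr a))" by simp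
        moreover have "exp (- u) = real s / (exp 1 * real d)"
          unfolding u_def using sdr by (simp add: exp_minus exp_ln)
        ultimately have "2 * (real s / (exp 1 * real d)) \<le> 2 * exp (- ((t / \<tau>) powr a))" by simp
        moreover have "q \<le> 2 * (real s / (exp 1 * real d))"
        proof -
          have "q = real s / (2 * real d)" by (simp add: q_def)
          also have "\<dots> \<le> real s / (exp 1 / 2 * real d)"
            using sdr exp1_le4 by (intro divide_left_mono mult_right_mono mult_pos_pos) auto
          also have "\<dots> = 2 * (real s / (exp 1 * real d))" by (simp add: field_simps)
          finally show ?thesis .
        qed
        ultimately show ?thesis by linarith
      qed
      then show ?thesis using False by (auto simp: A_def)
    qed
  qed
  have risk1: "risk ell a c s d T (Dm ({0::nat,1,2} \<times> {0::nat,1}) (f1 q) (\<lambda>p. (wv A (fst p) + cv (snd p)) / \<sigma>1)) \<sigma>1 (\<lambda>_. 0)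
     = ennreal (\<Sum>u\<in>{..<d} \<rightarrow>\<^sub>E {0::nat,1,2} \<times> {0::nat,1}. (\<Prod>i<d. fw q (fst (u i)) * (1/2)) * G1 (restrict (\<lambda>i. wv A (fst (u i)) + cv (snd (u i))) {..<d}))"
  proof -
    have "risk ell a c s d T (Dm ({0::nat,1,2} \<times> {0::nat,1}) (f1 q) (\<lambda>p. (wv A (fst p) + cv (snd p)) / \<sigma>1)) \<sigma>1 (\<lambda>_. 0)
      = ennreal (\<Sum>u\<in>{..<d} \<rightarrow>\<^sub>E {0::nat,1,2} \<times> {0::nat,1}. (\<Prod>i<d. f1 q (u i)) *
          ell (c / phi_exp a s d * \<bar>T (restrict (\<lambda>i. 0 + \<sigma>1 * ((wv A (fst (u i)) + cv (snd (u i))) / \<sigma>1)) {..<d}) / \<sigma>1\<^sup>2 - 1\<bar>))"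
      by (rule wts.risk_Dm[OF wts_f1 ell k s1(1) T]) (use q in auto)
    also have "\<dots> = ennreal (\<Sum>u\<in>{..<d} \<rightarrow>\<^sub>E {0::nat,1,2} \<times> {0::nat,1}. (\<Prod>i<d. fw q (fst (u i)) * (1/2)) * G1 (restrict (\<lambda>i. wv A (fst (u i)) + cv (snd (u i))) {..<d}))"
      unfolding G1_def f1_def using s1(1) by simp
    finally show ?thesis .
  qed
  have risk2: "risk ell a c s d T (Dm {0::nat,1} (\<lambda>_. 1/2) cv) 1 (restrict (\<lambda>i. wv A (\<alpha> i)) {..<d})
     = ennreal (\<Sum>\<beta>\<in>{..<d} \<rightarrow>\<^sub>E {0::nat,1}. (\<Prod>i<d. 1/2) * G2 (restrict (\<lambda>i. wv A (\<alpha> i) + cv (\<beta> i)) {..<d}))" for \<alpha>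
  proof -
    have "risk ell a c s d T (Dm {0::nat,1} (\<lambda>_. 1/2) cv) 1 (restrict (\<lambda>i. wv A (\<alpha> i)) {..<d})
      = ennreal (\<Sum>\<beta>\<in>{..<d} \<rightarrow>\<^sub>E {0::nat,1}. (\<Prod>i<d. 1/2) *
          ell (c / phi_exp a s d * \<bar>T (restrict (\<lambda>i. restrict (\<lambda>i. wv A (\<alpha> i)) {..<d} i + 1 * cv (\<beta> i)) {..<d}) / 1\<^sup>2 - 1\<bar>))"
      by (rule wts.risk_Dm[OF wts_core ell k _ T]) auto
    also have "\<dots> = ennreal (\<Sum>\<beta>\<in>{..<d} \<rightarrow>\<^sub>E {0::nat,1}. (\<Prod>i<d. 1/2) * G2 (restrict (\<lambda>i. wv A (\<alpha> i) + cv (\<beta> i)) {..<d}))"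
    proof -
      have "restrict (\<lambda>i. restrict (\<lambda>i. wv A (\<alpha> i)) {..<d} i + 1 * cv (\<beta> i)) {..<d} = restrict (\<lambda>i. wv A (\<alpha> i) + cv (\<beta> i)) {..<d}" for \<beta> :: "nat \<Rightarrow> nat"
        by (rule ext) auto
      then show ?thesis unfolding G2_def by simp
    qed
    finally show ?thesis .
  qed
  have z: "(\<lambda>_. 0) \<in> sparse_vecs d s" by (simp add: sparse_vecs_def)
  have q': "q = real s / real (2 * d)" by (simp add: q_def)
  have G1n': "\<And>y. G1 y \<ge> 0" by (rule G1n)
  have G2n': "\<And>y. G2 y \<ge> 0" by (rule G2n)
  have Gs': "\<And>y. ell x0 \<le> G1 y + G2 y" by (rule Gs)
  from sparse_bound[where A=A and Ga=G1 and Gb=G2, OF sd q' G1n' G2n' Gs' loss_nn[OF ell x0]]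
  show ?thesis
  proof (elim disjE bexE conjE)
    assume h: "ell x0 / 4 \<le> (\<Sum>u\<in>{..<d} \<rightarrow>\<^sub>E {0::nat,1,2} \<times> {0::nat,1}. (\<Prod>i<d. fw q (fst (u i)) * (1/2)) * G1 (restrict (\<lambda>i. wv A (fst (u i)) + cv (snd (u i))) {..<d}))"
    show ?thesis
    proof (intro bexI)
      show "ennreal (ell x0 / 8) \<le> risk ell a c s d T (Dm ({0::nat,1,2} \<times> {0::nat,1}) (f1 q) (\<lambda>p. (wv A (fst p) + cv (snd p)) / \<sigma>1)) \<sigma>1 (\<lambda>_. 0)"
        unfolding risk1 using h loss_nn[OF ell x0] by (intro ennreal_leI) linarith
    qed (use z noise1 s1 in auto)
  next
    fix \<alpha> assume al: "\<alpha> \<in> {..<d} \<rightarrow>\<^sub>E {0::nat,1,2}" and c: "card {i\<in>{..<d}. \<alpha> i \<noteq> 0} \<le> s"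
      and h: "ell x0 / 4 \<le> (\<Sum>\<beta>\<in>{..<d} \<rightarrow>\<^sub>E {0::nat,1}. (\<Prod>i<d. 1/2) * G2 (restrict (\<lambda>i. wv A (\<alpha> i) + cv (\<beta> i)) {..<d}))"
    have sp: "restrict (\<lambda>i. wv A (\<alpha> i)) {..<d} \<in> sparse_vecs d s"
    proof -
      have "{i\<in>{..<d}. restrict (\<lambda>i. wv A (\<alpha> i)) {..<d} i \<noteq> 0} = {i\<in>{..<d}. \<alpha> i \<noteq> 0}"
        using A0 by (auto simp: wv_def)
      then show ?thesis using c by (simp add: sparse_vecs_def)
    qed
    show ?thesis
    proof (intro bexI)
      show "ennreal (ell x0 / 8) \<le> risk ell a c s d T (Dm {0::nat,1} (\<lambda>_. 1/2) cv) 1 (restrict (\<lambda>i. wv A (\<alpha> i)) {..<d})"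
        unfolding risk2 using h loss_nn[OF ell x0] by (intro ennreal_leI) linarith
    qed (use sp core_noise in auto)
  qed
qed



theorem theorem5:
  fixes \<tau> a :: real and ell :: "real \<Rightarrow> real"
  assumes "\<tau> > 0" and "a > 0" and "ell \<in> loss_class"
  shows "\<exists>c c'. c > 0 \<and> c' > 0 \<and>
    (\<forall>s d :: nat. 1 \<le> s \<and> s \<le> d \<longrightarrow>
      (\<forall>T \<in> borel_measurable (PiM {..<d} (\<lambda>_. borel)).
         ennreal c' \<le> (SUP P \<in> noise_class a \<tau>. SUP \<sigma> \<in> {0<..}. SUP \<theta> \<in> sparse_vecs d s.
                          risk ell a c s d T P \<sigma> \<theta>)))"
proof -
  note tau = assms(1) and a = assms(2) and ell = assms(3)
  obtain x0 where x0: "x0 \<ge> 0" "ell x0 \<noteq> 0" using ell unfolding loss_class_def by auto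
  have l0: "ell x0 > 0" using loss_nn[OF ell x0(1)] x0(2) by simp
  have "ell 0 = 0" using ell unfolding loss_class_def by auto
  then have x0p: "x0 > 0" using x0 by (cases "x0 = 0") auto
  define Cp where "Cp = max 1 (exp 1 * (2 / a) powr (2 / a))"
  define \<kappa> where "\<kappa> = min (\<tau>\<^sup>2 / 512) (1 / (4 * Cp))"
  have Cp1: "Cp \<ge> 1" unfolding Cp_def by simp
  have k1: "\<kappa> > 0" using tau Cp1 unfolding \<kappa>_def by simp
  have k2: "\<kappa> \<le> \<tau>\<^sup>2 / 512" "\<kappa> \<le> 1 / (4 * Cp)" unfolding \<kappa>_def by auto
  have "1 / (4 * Cp) \<le> 1 / 4" using Cp1 by (intro divide_left_mono) auto
  then have kap: "\<kappa> > 0" "\<kappa> \<le> \<tau>\<^sup>2 / 512" "\<kappa> \<le> 1 / (4 * Cp)" "\<kappa> \<le> 1/4"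
    using k1 k2 by auto
  define c where "c = x0 / \<kappa>"
  show ?thesis
  proof (intro exI conjI allI impI ballI)
    show "c > 0" unfolding c_def using x0p kap by simp
    show "ell x0 / 8 > 0" using l0 by simp
    fix s d :: nat and T :: "(nat \<Rightarrow> real) \<Rightarrow> real" assume sd: "1 \<le> s \<and> s \<le> d" and T: "T \<in> borel_measurable (PiM {..<d} (\<lambda>_. (borel::real measure)))"
    define \<phi> where "\<phi> = phi_exp a s d"
    have phi: "\<phi> > 0" "\<phi> \<le> Cp" unfolding \<phi>_def Cp_def using phi_pos[of s d a] phi_bound[OF a, of s d] sd by auto
    have k: "c / phi_exp a s d \<ge> 0" using x0p kap phi unfolding c_def \<phi>_def by simp
    have key: "x0 \<le> c / phi_exp a s d * z" if z: "\<kappa> * \<phi> \<le> z" for z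
    proof -
      have "c / phi_exp a s d * (\<kappa> * \<phi>) = x0" unfolding c_def \<phi>_def using kap phi by (simp add: \<phi>_def)
      moreover have "c / phi_exp a s d * (\<kappa> * \<phi>) \<le> c / phi_exp a s d * z" using z k by (rule mult_left_mono)
      ultimately show ?thesis by simp
    qed
    have ex: "\<exists>P\<in>noise_class a \<tau>. \<exists>\<sigma>\<in>{0<..}. \<exists>\<theta>\<in>sparse_vecs d s. ennreal (ell x0 / 8) \<le> risk ell a c s d T P \<sigma> \<theta>"
    proof (cases "real s / real d * (ln (exp 1 * real d / real s)) powr (2 / a) \<le> 1 / sqrt d")
      case True
      then have pe: "\<phi> = 1 / sqrt d" unfolding \<phi>_def phi_exp_def by simp
      show ?thesis
      proof (rule dense_case[OF ell x0(1) _ _ T k])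
        show "1 \<le> s" "s \<le> d" using sd by auto
        show "x0 \<le> c / phi_exp a s d * (1 / sqrt (real d) / 4)"
          by (rule key) (use kap phi in \<open>simp add: pe[symmetric] mult_right_mono\<close>)
      qed
    next
      case False
      then have pe: "\<phi> = real s / real d * (ln (exp 1 * real d / real s)) powr (2 / a)" unfolding \<phi>_def phi_exp_def by simp
      show ?thesis
      proof (rule sparse_case[OF ell x0(1) a tau _ _ T k])
        show "1 \<le> s" "s \<le> d" using sd by auto
        show "x0 \<le> c / phi_exp a s d * (min (\<tau>\<^sup>2 / 128 * (real s / real d * (ln (exp 1 * real d / real s)) powr (2 / a))) 1 / 4)"
        proof (rule key)
          have 1: "\<kappa> * \<phi> \<le> \<tau>\<^sup>2 / 512 * \<phi>" using kap phi by (intro mult_right_mono) auto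
          have "\<kappa> * \<phi> \<le> 1 / (4 * Cp) * Cp" using kap phi by (intro mult_mono) auto
          then have 2: "\<kappa> * \<phi> \<le> 1 / 4" using Cp1 by simp
          show "\<kappa> * \<phi> \<le> min (\<tau>\<^sup>2 / 128 * (real s / real d * (ln (exp 1 * real d / real s)) powr (2 / a))) 1 / 4"
            unfolding pe[symmetric] using 1 2 by (auto simp: min_def)
        qed
      qed
    qed
    then obtain P \<sigma> \<theta> where "P \<in> noise_class a \<tau>" "\<sigma> \<in> {0<..}" "\<theta> \<in> sparse_vecs d s"
      "ennreal (ell x0 / 8) \<le> risk ell a c s d T P \<sigma> \<theta>" by blast
    then show "ennreal (ell x0 / 8) \<le> (SUP P \<in> noise_class a \<tau>. SUP \<sigma> \<in> {0<..}. SUP \<theta> \<in> sparse_vecs d s. risk ell a c s d T P \<sigma> \<theta>)"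
      by (rule SUP_ge)
  qed
qed


end
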